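(* Consider an additive noise channel $\mathbf r=\sqrt{p_s}\,\mathbf s+\boldsymbol\xi$ in $\mathbb R^n$ where the noise has density $f_{\boldsymbol\xi}(\mathbf x)=\int_0^\infty(2\pi\sigma^2)^{-n/2}\exp\{-|\mathbf x|^2/(2\sigma^2)\}f(\sigma)\,d\sigma$ for a univariate probability density $f(\sigma)$ with bounded support, $f(\sigma)=0$ for $\sigma\notin[\sigma_1,\sigma_2]$. Then the average symbol error rate $P_e(p_s)$ of any decoder with center-convex decision regions satisfies $P_e''(p_s)\ge0$ if $p_s\ge(n-2)\sigma_2^2/d_{\min}^2$, and $P_e''(p_s)\le 0$ if $p_s\le(n-2)\sigma_1^2/d_{\max}^2$.
   Context: This noise is a spherically-invariant (SIRP) noise with identity covariance shape. $p_s$ is the signal power: the normalized constellation $\{\mathbf s_1,\dots,\mathbf s_M\}$ (priors $\pi_k$) corresponds to $p_s=1$ and has pairwise disjoint decision regions $\Omega_k$; at signal power $p_s$ the transmitted points are $\sqrt{p_s}\mathbf s_k$ and the decision regions are $\sqrt{p_s}\Omega_k$ (output $\sqrt{p_s}\mathbf s_k$ if $\mathbf r\in\sqrt{p_s}\Omega_k$, error if $\mathbf r$ is in no region). $\Omega_k$ is center-convex if for every $\mathbf x\in\Omega_k$ the segment from $\mathbf s_k$ to $\mathbf x$ lies in $\Omega_k$ (e.g. min-distance/ML Voronoi regions). $P_e=\sum_k\pi_k(1-\Pr[\mathbf r\in\sqrt{p_s}\Omega_k\mid\text{$\sqrt{p_s}\mathbf s_k$ sent}])$. $d_{\min}$ ($d_{\max}$)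 is the minimum over $k$ of the minimum distance (maximum over $k$ of the maximum distance) from $\mathbf s_k$ to the boundary of $\Omega_k$ in the normalized constellation. *)

theory Defs
  imports "HOL-Analysis.Analysis"
begin

definition sirp_density :: "(real \<Rightarrow> real) \<Rightarrow> 'a::euclidean_space \<Rightarrow> real" where
  "sirp_density f x =
     (LINT \<sigma>:{0<..}|lborel.
        (2 * pi * \<sigma>\<^sup>2) powr (- real DIM('a) / 2) * exp (- (norm x)\<^sup>2 / (2 * \<sigma>\<^sup>2)) * f \<sigma>)"

definition symbol_error_rate ::
  "('a::euclidean_space \<Rightarrow> real) \<Rightarrow> nat \<Rightarrow> (nat \<Rightarrow> real) \<Rightarrow> (nat \<Rightarrow> 'a) \<Rightarrow> (nat \<Rightarrow> 'a set) \<Rightarrow> real \<Rightarrow> real"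
  where
  "symbol_error_rate fxi M prior s \<Omega> p =
     (\<Sum>k<M. prior k *
        (1 - (LINT r:((\<lambda>x. sqrt p *\<^sub>R x) ` \<Omega> k)|lborel. fxi (r - sqrt p *\<^sub>R s k))))"

definition center_convex :: "'a::real_vector \<Rightarrow> 'a set \<Rightarrow> bool" where
  "center_convex c \<Omega> \<longleftrightarrow> (\<forall>x\<in>\<Omega>. closed_segment c x \<subseteq> \<Omega>)"

definition d_min :: "nat \<Rightarrow> (nat \<Rightarrow> 'a::euclidean_space) \<Rightarrow> (nat \<Rightarrow> 'a set) \<Rightarrow> real" where
  "d_min M s \<Omega> = Min ((\<lambda>k. infdist (s k) (frontier (\<Omega> k))) ` {..<M})"

text \<open>Maximum over k of the maximal distance from s k to the boundary of Omega k
  (extended real: may be infinite for unbounded regions).\<close>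
definition d_max :: "nat \<Rightarrow> (nat \<Rightarrow> 'a::euclidean_space) \<Rightarrow> (nat \<Rightarrow> 'a set) \<Rightarrow> ereal" where
  "d_max M s \<Omega> = Max ((\<lambda>k. SUP b\<in>frontier (\<Omega> k). ereal (dist (s k) b)) ` {..<M})"

end

theory Submission
  imports Defs "HOL-Probability.Probability"
begin

lemma deriv_under_integral:
  fixes \<phi> \<phi>' :: "real \<Rightarrow> 'b \<Rightarrow> real" and B :: "'b \<Rightarrow> real"
  assumes e: "0 < e"
  and D: "\<And>t y. t \<in> ball x0 e \<Longrightarrow> ((\<lambda>t. \<phi> t y) has_real_derivative \<phi>' t y) (at t)"
  and m: "\<And>t. t \<in> ball x0 e \<Longrightarrow> \<phi> t \<in> borel_measurable M"
  and m': "\<phi>' x0 \<in> borel_measurable M"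
  and i: "integrable M (\<phi> x0)"
  and b: "\<And>t y. t \<in> ball x0 e \<Longrightarrow> \<bar>\<phi>' t y\<bar> \<le> B y"
  and iB: "integrable M B"
  shows "((\<lambda>t. LINT y|M. \<phi> t y) has_real_derivative (LINT y|M. \<phi>' x0 y)) (at x0)"
proof -
  have x0: "x0 \<in> ball x0 e" using e by simp
  have lip: "\<bar>\<phi> t y - \<phi> x0 y\<bar> \<le> B y * \<bar>t - x0\<bar>" if t: "t \<in> ball x0 e" for t y
  proof -
    have conv: "u \<in> ball x0 e" if "min t x0 \<le> u" "u \<le> max t x0" for u
      using t that by (auto simp: dist_real_def)
    consider "t < x0" | "t = x0" | "x0 < t" by linarith
    then show ?thesis
    proof cases
      case 1
      then obtain z where z: "t < z" "z < x0" "\<phi> x0 y - \<phi> t y = (x0 - t) * \<phi>' z y"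
        using MVT2[of t x0 "\<lambda>t. \<phi> t y" "\<lambda>t. \<phi>' t y"] D conv by force
      have "\<bar>\<phi>' z y\<bar> \<le> B y" using b conv z by force
      moreover have "\<bar>\<phi> t y - \<phi> x0 y\<bar> = (x0 - t) * \<bar>\<phi>' z y\<bar>"
        using z 1 by (metis abs_minus_commute abs_mult abs_of_pos diff_gt_0_iff_gt)
      ultimately show ?thesis using 1 by (simp add: mult.commute mult_left_mono)
    next
      case 2 then show ?thesis using b[OF x0, of y] by simp
    next
      case 3
      then obtain z where z: "x0 < z" "z < t" "\<phi> t y - \<phi> x0 y = (t - x0) * \<phi>' z y"
        using MVT2[of x0 t "\<lambda>t. \<phi> t y" "\<lambda>t. \<phi>' t y"] D conv by force
      have "\<bar>\<phi>' z y\<bar> \<le> B y" using b conv z by force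
      moreover have "\<bar>\<phi> t y - \<phi> x0 y\<bar> = (t - x0) * \<bar>\<phi>' z y\<bar>"
        using z 3 by (simp add: abs_mult)
      ultimately show ?thesis using 3 by (simp add: mult.commute mult_left_mono)
    qed
  qed
  have mB: "B \<in> borel_measurable M" using iB by auto
  have Bnn: "0 \<le> B y" for y using b[OF x0, of y] by linarith
  have it: "integrable M (\<phi> t)" if t: "t \<in> ball x0 e" for t
  proof -
    have "integrable M (\<lambda>y. \<phi> t y - \<phi> x0 y)"
      by (rule Bochner_Integration.integrable_bound[OF integrable_mult_right[OF iB, of "\<bar>t - x0\<bar>"]])
         (use m[OF t] m[OF x0] lip[OF t] Bnn in \<open>auto intro!: AE_I2 simp: abs_mult mult.commute\<close>)
    then have "integrable M (\<lambda>y. (\<phi> t y - \<phi> x0 y) + \<phi> x0 y)" using i by (rule Bochner_Integration.integrable_add)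
    then show ?thesis by simp
  qed
  define q where "q t y = (\<phi> t y - \<phi> x0 y) / (t - x0)" for t y
  have qb: "\<bar>q t y\<bar> \<le> B y" if "t \<in> ball x0 e" "t \<noteq> x0" for t y
    using lip[OF that(1), of y] that by (simp add: q_def abs_divide divide_le_eq)
  have qlim: "((\<lambda>t. q t y) \<longlongrightarrow> \<phi>' x0 y) (at x0)" for y
    using D[OF x0, of y] unfolding has_field_derivative_iff q_def .
  have eq: "(LINT y|M. \<phi> t y) - (LINT y|M. \<phi> x0 y) = (t - x0) * (LINT y|M. q t y)"
    if "t \<in> ball x0 e" "t \<noteq> x0" for t
    using that it[OF that(1)] i by (simp add: q_def integral_diff[symmetric])
  show ?thesis
    unfolding has_field_derivative_iff
  proof (subst tendsto_at_iff_sequentially, intro allI impI)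
    fix X :: "nat \<Rightarrow> real" assume X: "\<forall>i. X i \<in> UNIV - {x0}" and lim: "X \<longlonglongrightarrow> x0"
    from lim e obtain N0 where N0: "\<And>n. n \<ge> N0 \<Longrightarrow> dist (X n) x0 < e"
      by (auto simp: lim_sequentially)
    have Xb: "X (n + N0) \<in> ball x0 e" for n using N0[of "n + N0"] by (simp add: dist_commute)
    have "(\<lambda>n. LINT y|M. q (X (n + N0)) y) \<longlonglongrightarrow> (LINT y|M. \<phi>' x0 y)"
    proof (rule integral_dominated_convergence[where w=B])
      show "(\<lambda>y. q (X (n + N0)) y) \<in> borel_measurable M" for n
        using m[OF Xb] m[OF x0] by (simp add: q_def)
      show "AE y in M. (\<lambda>n. q (X (n + N0)) y) \<longlonglongrightarrow> \<phi>' x0 y"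
      proof (rule AE_I2)
        fix y
        have "(\<lambda>n. X (n + N0)) \<longlonglongrightarrow> x0" using LIMSEQ_ignore_initial_segment[OF lim] .
        moreover have "\<forall>n. X (n + N0) \<in> UNIV - {x0}" using X by auto
        ultimately show "(\<lambda>n. q (X (n + N0)) y) \<longlonglongrightarrow> \<phi>' x0 y"
          using spec[OF qlim[of y, unfolded tendsto_at_iff_sequentially comp_def], of "\<lambda>n. X (n + N0)"] by simp
      qed
      show "AE y in M. norm (q (X (n + N0)) y) \<le> B y" for n
        using qb[OF Xb] X by auto
    qed (use m' iB in auto)
    then have "(\<lambda>n. LINT y|M. q (X n) y) \<longlonglongrightarrow> (LINT y|M. \<phi>' x0 y)"
      by (rule LIMSEQ_offset)
    moreover have "eventually (\<lambda>n. LINT y|M. q (X n) y = ((\<lambda>t. ((LINT y|M. \<phi> t y) - (LINT y|M. \<phi> x0 y)) / (t - x0)) \<circ> X) n) sequentially"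
      unfolding eventually_sequentially
    proof (intro exI allI impI)
      fix n assume "n \<ge> N0"
      then show "LINT y|M. q (X n) y = ((\<lambda>t. ((LINT y|M. \<phi> t y) - (LINT y|M. \<phi> x0 y)) / (t - x0)) \<circ> X) n"
        using eq[of "X n"] N0[of n] X by (auto simp: dist_commute)
    qed
    ultimately show "((\<lambda>t. ((LINT y|M. \<phi> t y) - (LINT y|M. \<phi> x0 y)) / (t - x0)) \<circ> X) \<longlonglongrightarrow> (LINT y|M. \<phi>' x0 y)"
      by (rule Lim_transform_eventually)
  qed
qed

lemma gauss1d: assumes c: "0 < c" shows "integrable lborel (\<lambda>x::real. exp (- c * x\<^sup>2))"
proof -
  define \<sigma> where "\<sigma> = sqrt (1 / (2 * c))"
  have s2: "2 * \<sigma>\<^sup>2 = 1 / c" using c by (simp add: \<sigma>_def)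
  have sp: "0 < \<sigma>" using c by (simp add: \<sigma>_def)
  have "integrable lborel (\<lambda>x. sqrt (2 * pi * \<sigma>\<^sup>2) * normal_density 0 \<sigma> x)"
    using integrable_normal_density[OF sp, of 0] by simp
  moreover have "sqrt (2 * pi * \<sigma>\<^sup>2) * normal_density 0 \<sigma> x = exp (- c * x\<^sup>2)" for x
  proof -
    have "sqrt (2 * pi * \<sigma>\<^sup>2) > 0" using c by (simp add: \<sigma>_def)
    moreover have "- (x\<^sup>2) / (2 * \<sigma>\<^sup>2) = - c * x\<^sup>2" using s2 c by simp
    ultimately show ?thesis unfolding normal_density_def using sp by simp
  qed
  ultimately show ?thesis by simp
qed

lemma norm_sum_basis_sq:
  "(norm (\<Sum>b\<in>Basis. f b *\<^sub>R b :: 'a::euclidean_space))\<^sup>2 = (\<Sum>b\<in>Basis. (f b)\<^sup>2)"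
proof -
  have i: "(\<Sum>b'\<in>Basis. f b' *\<^sub>R b' :: 'a) \<bullet> b = f b" if "b \<in> Basis" for b
    using that by (simp add: inner_sum_left inner_Basis if_distrib cong: if_cong)
  show ?thesis
    unfolding power2_norm_eq_inner
    by (subst euclidean_inner) (simp add: i power2_eq_square)
qed

lemma gauss_int:
  assumes c: "0 < c" shows "integrable lborel (\<lambda>y::'a::euclidean_space. exp (- c * (norm y)\<^sup>2))"
proof -
  interpret product_sigma_finite "\<lambda>_. lborel" by standard
  have "integrable (Pi\<^sub>M Basis (\<lambda>_. lborel)) (\<lambda>f. \<Prod>b\<in>(Basis::'a set). exp (- c * (f b)\<^sup>2))"
    by (rule product_integrable_prod) (use gauss1d[OF c] in auto)
  moreover have "(\<Prod>b\<in>(Basis::'a set). exp (- c * (f b)\<^sup>2)) = exp (- c * (norm (\<Sum>b\<in>Basis. f b *\<^sub>R b :: 'a))\<^sup>2)" for f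
    by (simp add: norm_sum_basis_sq exp_sum[symmetric] sum_distrib_left)
  ultimately have "integrable (Pi\<^sub>M Basis (\<lambda>_. lborel)) (\<lambda>f. exp (- c * (norm (\<Sum>b\<in>Basis. f b *\<^sub>R b :: 'a))\<^sup>2))"
    by simp
  then have "integrable (distr (Pi\<^sub>M Basis (\<lambda>_. lborel)) borel (\<lambda>f. \<Sum>b\<in>Basis. f b *\<^sub>R b :: 'a)) (\<lambda>y. exp (- c * (norm y)\<^sup>2))"
    by (subst integrable_distr_eq) auto
  then show ?thesis by (simp add: lborel_eq[symmetric])
qed

lemma gauss_int_mom:
  assumes c: "0 < c" and j: "j \<le> (2::nat)"
  shows "integrable lborel (\<lambda>y::'a::euclidean_space. exp (- c * (norm y)\<^sup>2) * ((norm y)\<^sup>2) ^ j)"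
proof -
  have bnd: "t ^ j \<le> (16 / c\<^sup>2 + 2 / c + 1) * exp (c * t / 2)" if t: "0 \<le> t" for t
  proof -
    have e1: "1 \<le> exp (c * t / 2)" using c t by simp
    have "c * t / 4 \<le> exp (c * t / 4)" using exp_ge_add_one_self[of "c * t / 4"] by linarith
    then have t4: "t \<le> (4 / c) * exp (c * t / 4)" using c by (simp add: field_simps)
    have "c * t / 2 \<le> exp (c * t / 2)" using exp_ge_add_one_self[of "c * t / 2"] by linarith
    then have t2: "t \<le> (2 / c) * exp (c * t / 2)" using c by (simp add: field_simps)
    have "t\<^sup>2 \<le> ((4 / c) * exp (c * t / 4))\<^sup>2" using t4 t by (intro power_mono) auto
    also have "\<dots> = (16 / c\<^sup>2) * exp (c * t / 2)"
      by (simp add: power_mult_distrib power2_eq_square exp_add[symmetric])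
    finally have tt: "t\<^sup>2 \<le> (16 / c\<^sup>2) * exp (c * t / 2)" .
    have p: "0 \<le> 16 / c\<^sup>2 * exp (c * t / 2)" "0 \<le> 2 / c * exp (c * t / 2)" using c by auto
    have sum: "(16 / c\<^sup>2 + 2 / c + 1) * exp (c * t / 2) = 16 / c\<^sup>2 * exp (c * t / 2) + 2 / c * exp (c * t / 2) + exp (c * t / 2)"
      by (simp add: distrib_right)
    consider "j = 0" | "j = 1" | "j = 2" using j by linarith
    then show ?thesis
    proof cases
      case 1 then have "t ^ j = 1" by simp
      then show ?thesis using sum e1 p by linarith
    next
      case 2 then have "t ^ j = t" by simp
      then show ?thesis using sum t2 e1 p by linarith
    next
      case 3 then have "t ^ j = t\<^sup>2" by simp
      then show ?thesis using sum tt e1 p by linarith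
    qed
  qed
  show ?thesis
  proof (rule Bochner_Integration.integrable_bound)
    show "integrable lborel (\<lambda>y::'a. (16 / c\<^sup>2 + 2 / c + 1) * exp (- (c/2) * (norm y)\<^sup>2))"
      using gauss_int[of "c/2", where 'a='a] c by simp
    show "AE y in lborel. norm (exp (- c * (norm y)\<^sup>2) * ((norm y)\<^sup>2) ^ j)
       \<le> norm ((16 / c\<^sup>2 + 2 / c + 1) * exp (- (c/2) * (norm (y::'a))\<^sup>2))"
    proof (rule AE_I2)
      fix y :: 'a
      have "exp (- c * (norm y)\<^sup>2) * ((norm y)\<^sup>2) ^ j \<le> exp (- c * (norm y)\<^sup>2) * ((16 / c\<^sup>2 + 2 / c + 1) * exp (c * (norm y)\<^sup>2 / 2))"
        using bnd[of "(norm y)\<^sup>2"] by (intro mult_left_mono) auto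
      also have "\<dots> = (16 / c\<^sup>2 + 2 / c + 1) * exp (- (c/2) * (norm y)\<^sup>2)"
        by (simp add: exp_add[symmetric] field_simps)
      finally show "norm (exp (- c * (norm y)\<^sup>2) * ((norm y)\<^sup>2) ^ j)
       \<le> norm ((16 / c\<^sup>2 + 2 / c + 1) * exp (- (c/2) * (norm (y::'a))\<^sup>2))"
        using c by simp
    qed
  qed auto
qed

lemma gauss_poly:
  assumes c: "0 < c"
  shows "integrable lborel (\<lambda>y::'a::euclidean_space. exp (- c * (norm y)\<^sup>2) * (\<alpha> + \<beta> * (norm y)\<^sup>2 + \<gamma> * ((norm y)\<^sup>2)\<^sup>2))"
proof -
  have i0: "integrable lborel (\<lambda>y::'a. \<alpha> * (exp (- c * (norm y)\<^sup>2) * ((norm y)\<^sup>2) ^ 0))"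
    using gauss_int_mom[OF c, of 0, where 'a='a] by simp
  have i1: "integrable lborel (\<lambda>y::'a. \<beta> * (exp (- c * (norm y)\<^sup>2) * ((norm y)\<^sup>2) ^ 1))"
    using gauss_int_mom[OF c, of 1, where 'a='a] by simp
  have i2: "integrable lborel (\<lambda>y::'a. \<gamma> * (exp (- c * (norm y)\<^sup>2) * ((norm y)\<^sup>2) ^ 2))"
    using gauss_int_mom[OF c, of 2, where 'a='a] by simp
  have "integrable lborel (\<lambda>y::'a. \<alpha> * (exp (- c * (norm y)\<^sup>2) * ((norm y)\<^sup>2) ^ 0) +
      \<beta> * (exp (- c * (norm y)\<^sup>2) * ((norm y)\<^sup>2) ^ 1) + \<gamma> * (exp (- c * (norm y)\<^sup>2) * ((norm y)\<^sup>2) ^ 2))"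
    using i0 i1 i2 by (intro Bochner_Integration.integrable_add) auto
  then show ?thesis by (simp add: algebra_simps)
qed

lemma lborel_integral_affine_euclid:
  fixes F :: "'a::euclidean_space \<Rightarrow> real"
  assumes c: "c \<noteq> 0" and F[measurable]: "F \<in> borel_measurable borel"
  shows "integral\<^sup>L lborel F = \<bar>c\<bar> ^ DIM('a) * integral\<^sup>L lborel (\<lambda>y. F (t + c *\<^sub>R y))"
proof -
  have "lborel = density (distr lborel borel (\<lambda>x::'a. t + c *\<^sub>R x)) (\<lambda>_. \<bar>c\<bar>^DIM('a))"
    by (rule lborel_affine[OF c])
  then have "integral\<^sup>L lborel F = integral\<^sup>L (density (distr lborel borel (\<lambda>x::'a. t + c *\<^sub>R x)) (\<lambda>_. \<bar>c\<bar>^DIM('a))) F"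
    by (rule arg_cong)
  also have "\<dots> = integral\<^sup>L (distr lborel borel (\<lambda>x::'a. t + c *\<^sub>R x)) (\<lambda>x. \<bar>c\<bar>^DIM('a) *\<^sub>R F x)"
    by (subst integral_density) auto
  also have "\<dots> = integral\<^sup>L lborel (\<lambda>y. \<bar>c\<bar>^DIM('a) *\<^sub>R F (t + c *\<^sub>R y))"
    by (subst integral_distr) auto
  also have "\<dots> = \<bar>c\<bar> ^ DIM('a) * integral\<^sup>L lborel (\<lambda>y. F (t + c *\<^sub>R y))"
    by simp
  finally show ?thesis .
qed

lemma sqrt_pow_powr: "0 < a \<Longrightarrow> sqrt a ^ n = a powr (real n / 2)"
  by (simp add: powr_half_sqrt[symmetric] powr_realpow[symmetric] powr_powr)

lemma lborel_integral_scale: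
  fixes F :: "'a::euclidean_space \<Rightarrow> real"
  assumes a: "0 < a" and F[measurable]: "F \<in> borel_measurable borel"
  shows "integral\<^sup>L lborel (\<lambda>y. a powr (real DIM('a) / 2) * F (sqrt a *\<^sub>R y)) = integral\<^sup>L lborel F"
proof -
  have "integral\<^sup>L lborel F = \<bar>sqrt a\<bar> ^ DIM('a) * integral\<^sup>L lborel (\<lambda>y. F (0 + sqrt a *\<^sub>R y))"
    using a by (intro lborel_integral_affine_euclid) auto
  also have "\<bar>sqrt a\<bar> ^ DIM('a) = a powr (real DIM('a) / 2)" using a by (simp add: sqrt_pow_powr)
  finally show ?thesis by simp
qed

definition gg :: "real \<Rightarrow> 'a::euclidean_space \<Rightarrow> real" where
  "gg a y = (2*pi) powr (- real DIM('a) / 2) * a powr (real DIM('a) / 2) * exp (- (a * (norm y)\<^sup>2) / 2)"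
definition gg1 :: "real \<Rightarrow> 'a::euclidean_space \<Rightarrow> real" where
  "gg1 a y = gg a y * (real DIM('a) / (2*a) - (norm y)\<^sup>2 / 2)"
definition gg2 :: "real \<Rightarrow> 'a::euclidean_space \<Rightarrow> real" where
  "gg2 a y = gg a y * ((real DIM('a) / (2*a) - (norm y)\<^sup>2 / 2)\<^sup>2 - real DIM('a) / (2*a\<^sup>2))"

lemma gg_nonneg: "0 \<le> gg a y" by (simp add: gg_def)

lemma gg_meas[measurable]: "(\<lambda>(a, y). gg a y) \<in> borel_measurable (borel \<Otimes>\<^sub>M borel)"
  "(\<lambda>(a, y). gg1 a y) \<in> borel_measurable (borel \<Otimes>\<^sub>M borel)"
  "(\<lambda>(a, y). gg2 a y) \<in> borel_measurable (borel \<Otimes>\<^sub>M borel)"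
  unfolding gg_def gg1_def gg2_def by measurable

lemma gg_meas'[measurable]: "gg a \<in> borel_measurable borel" "gg1 a \<in> borel_measurable borel" "gg2 a \<in> borel_measurable borel"
  unfolding gg_def gg1_def gg2_def by measurable

lemma gg_deriv:
  assumes a: "0 < a"
  shows "((\<lambda>a. gg a y) has_real_derivative gg1 a y) (at a)"
proof -
  let ?N = "real DIM('a)"
  have p: "((\<lambda>a. a powr (?N/2)) has_real_derivative (?N/2) * a powr (?N/2 - 1)) (at a)"
    by (rule has_real_derivative_powr[OF a])
  have e: "((\<lambda>a. exp (- (a * (norm y)\<^sup>2) / 2)) has_real_derivative exp (- (a * (norm y)\<^sup>2) / 2) * (- (norm y)\<^sup>2 / 2)) (at a)"
    by (auto intro!: derivative_eq_intros)
  have "((\<lambda>a. (2*pi) powr (- ?N / 2) * (a powr (?N/2) * exp (- (a * (norm y)\<^sup>2) / 2))) has_real_derivative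
      (2*pi) powr (- ?N / 2) * (a powr (?N/2) * (exp (- (a * (norm y)\<^sup>2) / 2) * (- (norm y)\<^sup>2 / 2)) + (?N/2) * a powr (?N/2 - 1) * exp (- (a * (norm y)\<^sup>2) / 2))) (at a)"
    by (intro DERIV_cmult DERIV_mult' p e)
  moreover have pd: "a powr (?N/2 - 1) = a powr (?N/2) / a" using a by (simp add: powr_diff)
  moreover have "(\<lambda>a. gg a y) = (\<lambda>a. (2*pi) powr (- ?N / 2) * (a powr (?N/2) * exp (- (a * (norm y)\<^sup>2) / 2)))"
    by (simp add: gg_def mult.assoc)
  moreover have "(2*pi) powr (- ?N / 2) * (a powr (?N/2) * (exp (- (a * (norm y)\<^sup>2) / 2) * (- (norm y)\<^sup>2 / 2)) + (?N/2) * (a powr (?N/2) / a) * exp (- (a * (norm y)\<^sup>2) / 2)) = gg1 a y"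
    unfolding gg1_def gg_def using a by (simp add: field_simps)
  ultimately show ?thesis by (metis (no_types, lifting) DERIV_cong)
qed

lemma gg1_deriv:
  assumes a: "0 < a"
  shows "((\<lambda>a. gg1 a y) has_real_derivative gg2 a y) (at a)"
proof -
  let ?N = "real DIM('a)"
  have u: "((\<lambda>a. ?N / (2*a) - (norm y)\<^sup>2 / 2) has_real_derivative - ?N / (2*a\<^sup>2)) (at a)"
    using a by (auto intro!: derivative_eq_intros simp: power2_eq_square field_simps)
  have "((\<lambda>a. gg a y * (?N / (2*a) - (norm y)\<^sup>2 / 2)) has_real_derivative
     gg a y * (- ?N / (2*a\<^sup>2)) + gg1 a y * (?N / (2*a) - (norm y)\<^sup>2 / 2)) (at a)"
    by (intro DERIV_mult' gg_deriv[OF a] u)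
  then show ?thesis unfolding gg1_def[abs_def] gg2_def
    by (simp add: power2_eq_square algebra_simps)
qed

definition HH :: "'a::euclidean_space set \<Rightarrow> real \<Rightarrow> real" where
  "HH A a = (LINT y|lborel. indicator A y * gg a y)"
definition HH1 :: "'a::euclidean_space set \<Rightarrow> real \<Rightarrow> real" where
  "HH1 A a = (LINT y|lborel. indicator A y * gg1 a y)"
definition HH2 :: "'a::euclidean_space set \<Rightarrow> real \<Rightarrow> real" where
  "HH2 A a = (LINT y|lborel. indicator A y * gg2 a y)"

lemma gg_integrable: assumes a: "0 < a" shows "integrable lborel (gg a :: 'a::euclidean_space \<Rightarrow> real)"
proof -
  have "integrable lborel (\<lambda>y::'a. exp (- (a/2) * (norm y)\<^sup>2) * ((2*pi) powr (- real DIM('a) / 2) * a powr (real DIM('a) / 2) + 0 * (norm y)\<^sup>2 + 0 * ((norm y)\<^sup>2)\<^sup>2))"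
    using a by (intro gauss_poly) auto
  then show ?thesis by (simp add: gg_def[abs_def] mult.commute mult.left_commute)
qed

context
  fixes a0 :: real
  assumes a0: "0 < a0"
begin

lemma ballD: "t \<in> ball a0 (a0/2) \<Longrightarrow> a0/2 < t \<and> t < 2*a0 \<and> 0 < t"
  using a0 unfolding mem_ball dist_real_def by (cases "a0 \<le> t") auto

definition "KK (_::'a::euclidean_space itself) = (2*pi) powr (- real DIM('a) / 2) * (2*a0) powr (real DIM('a) / 2)"

lemma KK_nonneg: "0 \<le> KK TYPE('a::euclidean_space)" by (simp add: KK_def)

lemma gg_bound: assumes t: "t \<in> ball a0 (a0/2)"
  shows "gg t (y::'a::euclidean_space) \<le> KK TYPE('a) * exp (- (a0/4) * (norm y)\<^sup>2)"
proof -
  have t1: "a0/2 < t" "t < 2*a0" using ballD[OF t] by auto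
  have "t powr (real DIM('a) / 2) \<le> (2*a0) powr (real DIM('a) / 2)"
    using t1 a0 by (intro powr_mono2) auto
  moreover have "exp (- (t * (norm y)\<^sup>2) / 2) \<le> exp (- (a0/4) * (norm y)\<^sup>2)"
  proof -
    have "a0 * (norm y)\<^sup>2 \<le> (t*2) * (norm y)\<^sup>2" using t1 by (intro mult_right_mono) auto
    then show ?thesis by (simp add: algebra_simps)
  qed
  ultimately show ?thesis unfolding gg_def KK_def
    by (auto intro!: mult_left_mono mult_mono)
qed

lemma gg1_bound: assumes t: "t \<in> ball a0 (a0/2)"
  shows "\<bar>gg1 t (y::'a::euclidean_space)\<bar> \<le> KK TYPE('a) * (exp (- (a0/4) * (norm y)\<^sup>2) * (real DIM('a) / a0 + 1/2 * (norm y)\<^sup>2 + 0 * ((norm y)\<^sup>2)\<^sup>2))"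
proof -
  have t1: "a0/2 < t" "t < 2*a0" using ballD[OF t] by auto
  have "\<bar>real DIM('a) / (2*t) - (norm y)\<^sup>2 / 2\<bar> \<le> real DIM('a) / (2*t) + (norm y)\<^sup>2 / 2"
    using t1 a0 by (intro abs_triangle_ineq4[THEN order_trans]) auto
  also have "\<dots> \<le> real DIM('a) / a0 + (norm y)\<^sup>2 / 2"
    using t1 a0 by (auto intro!: divide_left_mono)
  finally have u: "\<bar>real DIM('a) / (2*t) - (norm y)\<^sup>2 / 2\<bar> \<le> real DIM('a) / a0 + (norm y)\<^sup>2 / 2" .
  have "\<bar>gg1 t y\<bar> = gg t y * \<bar>real DIM('a) / (2*t) - (norm y)\<^sup>2 / 2\<bar>"
    unfolding gg1_def using gg_nonneg[of t y] by (simp add: abs_mult)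
  also have "\<dots> \<le> (KK TYPE('a) * exp (- (a0/4) * (norm y)\<^sup>2)) * (real DIM('a) / a0 + (norm y)\<^sup>2 / 2)"
    using gg_bound[OF t, of y] u gg_nonneg KK_nonneg[where 'a='a] by (intro mult_mono) auto
  finally show ?thesis by (simp add: algebra_simps)
qed

lemma gg2_bound: assumes t: "t \<in> ball a0 (a0/2)"
  shows "\<bar>gg2 t (y::'a::euclidean_space)\<bar> \<le> KK TYPE('a) * (exp (- (a0/4) * (norm y)\<^sup>2) *
     (((real DIM('a) / a0)\<^sup>2 + 2 * real DIM('a) / a0\<^sup>2) + (real DIM('a) / a0) * (norm y)\<^sup>2 + 1/4 * ((norm y)\<^sup>2)\<^sup>2))"
proof -
  let ?N = "real DIM('a)"
  have t1: "a0/2 < t" "t < 2*a0" using ballD[OF t] by auto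
  have "\<bar>?N / (2*t) - (norm y)\<^sup>2 / 2\<bar> \<le> ?N / (2*t) + (norm y)\<^sup>2 / 2"
    using t1 a0 by (intro abs_triangle_ineq4[THEN order_trans]) auto
  also have "\<dots> \<le> ?N / a0 + (norm y)\<^sup>2 / 2"
    using t1 a0 by (auto intro!: divide_left_mono)
  finally have u: "\<bar>?N / (2*t) - (norm y)\<^sup>2 / 2\<bar> \<le> ?N / a0 + (norm y)\<^sup>2 / 2" .
  have u2: "(?N / (2*t) - (norm y)\<^sup>2 / 2)\<^sup>2 \<le> (?N / a0 + (norm y)\<^sup>2 / 2)\<^sup>2"
    using u by (metis abs_le_square_iff abs_of_nonneg add_nonneg_nonneg divide_nonneg_nonneg of_nat_0_le_iff
        order_less_le zero_le_power2 a0 abs_ge_zero order.trans)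
  have "(a0/2)\<^sup>2 \<le> t\<^sup>2" using t1 a0 by (intro power_mono) auto
  then have v: "?N / (2*t\<^sup>2) \<le> 2 * ?N / a0\<^sup>2"
    using a0 t1 by (simp add: field_simps power2_eq_square mult_left_mono)
  have "\<bar>(?N / (2*t) - (norm y)\<^sup>2 / 2)\<^sup>2 - ?N / (2*t\<^sup>2)\<bar> \<le> (?N / (2*t) - (norm y)\<^sup>2 / 2)\<^sup>2 + ?N / (2*t\<^sup>2)"
    by (intro abs_triangle_ineq4[THEN order_trans]) auto
  also have "\<dots> \<le> (?N / a0 + (norm y)\<^sup>2 / 2)\<^sup>2 + 2 * ?N / a0\<^sup>2" using u2 v by linarith
  finally have w: "\<bar>(?N / (2*t) - (norm y)\<^sup>2 / 2)\<^sup>2 - ?N / (2*t\<^sup>2)\<bar> \<le> (?N / a0 + (norm y)\<^sup>2 / 2)\<^sup>2 + 2 * ?N / a0\<^sup>2" .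
  have "\<bar>gg2 t y\<bar> = gg t y * \<bar>(?N / (2*t) - (norm y)\<^sup>2 / 2)\<^sup>2 - ?N / (2*t\<^sup>2)\<bar>"
    unfolding gg2_def using gg_nonneg[of t y] by (simp add: abs_mult)
  also have "\<dots> \<le> (KK TYPE('a) * exp (- (a0/4) * (norm y)\<^sup>2)) * ((?N / a0 + (norm y)\<^sup>2 / 2)\<^sup>2 + 2 * ?N / a0\<^sup>2)"
    using gg_bound[OF t, of y] w gg_nonneg KK_nonneg[where 'a='a] by (intro mult_mono) auto
  finally show ?thesis by (simp add: algebra_simps power2_eq_square)
qed

end

lemma ind_meas[measurable]: "A \<in> sets lborel \<Longrightarrow> indicator A \<in> borel_measurable (borel :: 'a::euclidean_space measure)"
  by (simp add: borel_measurable_indicator)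

lemma HH_deriv:
  fixes A :: "'a::euclidean_space set"
  assumes A: "A \<in> sets lborel" and a: "0 < a"
  shows "(HH A has_real_derivative HH1 A a) (at a)"
proof -
  let ?N = "real DIM('a)"
  have "((\<lambda>t. LINT y|lborel. indicator A y * gg t y) has_real_derivative (LINT y|lborel. indicator A y * gg1 a y)) (at a)"
  proof (rule deriv_under_integral[where e="a/2" and B="\<lambda>y. KK a TYPE('a) * (exp (- (a/4) * (norm y)\<^sup>2) * (?N / a + 1/2 * (norm y)\<^sup>2 + 0 * ((norm y)\<^sup>2)\<^sup>2))"])
    show "0 < a/2" using a by simp
    fix t y assume t: "t \<in> ball a (a/2)"
    then have "0 < t" using ballD[OF a] by auto
    then show "((\<lambda>t. indicator A y * gg t y) has_real_derivative indicator A y * gg1 t y) (at t)"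
      by (intro DERIV_cmult gg_deriv)
    show "\<bar>indicator A y * gg1 t y\<bar> \<le> KK a TYPE('a) * (exp (- (a/4) * (norm y)\<^sup>2) * (?N / a + 1/2 * (norm y)\<^sup>2 + 0 * ((norm y)\<^sup>2)\<^sup>2))"
      using gg1_bound[OF a t, of y] by (auto simp: indicator_def)
  next
    fix t show "(\<lambda>y. indicator A y * gg t y) \<in> borel_measurable lborel" using A by measurable
  next
    show "(\<lambda>y. indicator A y * gg1 a y) \<in> borel_measurable lborel" using A by measurable
    show "integrable lborel (\<lambda>y. indicator A y * gg a y)"
      using integrable_mult_indicator[OF A gg_integrable[OF a]] by simp
    show "integrable lborel (\<lambda>y::'a. KK a TYPE('a) * (exp (- (a/4) * (norm y)\<^sup>2) * (?N / a + 1/2 * (norm y)\<^sup>2 + 0 * ((norm y)\<^sup>2)\<^sup>2)))"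
      using a by (intro integrable_mult_right gauss_poly) auto
  qed
  then show ?thesis by (simp add: HH_def[abs_def] HH1_def)
qed

lemma HH1_integrable:
  fixes A :: "'a::euclidean_space set"
  assumes A: "A \<in> sets lborel" and a: "0 < a"
  shows "integrable lborel (\<lambda>y. indicator A y * gg1 a y)"
proof (rule Bochner_Integration.integrable_bound)
  let ?N = "real DIM('a)"
  show "integrable lborel (\<lambda>y::'a. KK a TYPE('a) * (exp (- (a/4) * (norm y)\<^sup>2) * (?N / a + 1/2 * (norm y)\<^sup>2 + 0 * ((norm y)\<^sup>2)\<^sup>2)))"
    using a by (intro integrable_mult_right gauss_poly) auto
  have "a \<in> ball a (a/2)" using a by simp
  from gg1_bound[OF a this] show "AE y in lborel. norm (indicator A y * gg1 a y) \<le> norm (KK a TYPE('a) * (exp (- (a/4) * (norm y)\<^sup>2) * (?N / a + 1/2 * (norm y)\<^sup>2 + 0 * ((norm y)\<^sup>2)\<^sup>2)))"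
    by (intro AE_I2) (auto simp: indicator_def intro: order_trans[OF _ abs_ge_self])
  show "(\<lambda>y. indicator A y * gg1 a y) \<in> borel_measurable lborel" using A by measurable
qed

lemma HH1_deriv:
  fixes A :: "'a::euclidean_space set"
  assumes A: "A \<in> sets lborel" and a: "0 < a"
  shows "(HH1 A has_real_derivative HH2 A a) (at a)"
proof -
  let ?N = "real DIM('a)"
  have "((\<lambda>t. LINT y|lborel. indicator A y * gg1 t y) has_real_derivative (LINT y|lborel. indicator A y * gg2 a y)) (at a)"
  proof (rule deriv_under_integral[where e="a/2" and B="\<lambda>y. KK a TYPE('a) * (exp (- (a/4) * (norm y)\<^sup>2) *
     (((?N / a)\<^sup>2 + 2 * ?N / a\<^sup>2) + (?N / a) * (norm y)\<^sup>2 + 1/4 * ((norm y)\<^sup>2)\<^sup>2))"])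
    show "0 < a/2" using a by simp
    fix t y assume t: "t \<in> ball a (a/2)"
    then have "0 < t" using ballD[OF a] by auto
    then show "((\<lambda>t. indicator A y * gg1 t y) has_real_derivative indicator A y * gg2 t y) (at t)"
      by (intro DERIV_cmult gg1_deriv)
    show "\<bar>indicator A y * gg2 t y\<bar> \<le> KK a TYPE('a) * (exp (- (a/4) * (norm y)\<^sup>2) *
     (((?N / a)\<^sup>2 + 2 * ?N / a\<^sup>2) + (?N / a) * (norm y)\<^sup>2 + 1/4 * ((norm y)\<^sup>2)\<^sup>2))"
      using gg2_bound[OF a t, of y] by (auto simp: indicator_def)
  next
    fix t show "(\<lambda>y. indicator A y * gg1 t y) \<in> borel_measurable lborel" using A by measurable
  next
    show "(\<lambda>y. indicator A y * gg2 a y) \<in> borel_measurable lborel" using A by measurable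
    show "integrable lborel (\<lambda>y. indicator A y * gg1 a y)" by (rule HH1_integrable[OF A a])
    show "integrable lborel (\<lambda>y::'a. KK a TYPE('a) * (exp (- (a/4) * (norm y)\<^sup>2) *
     (((?N / a)\<^sup>2 + 2 * ?N / a\<^sup>2) + (?N / a) * (norm y)\<^sup>2 + 1/4 * ((norm y)\<^sup>2)\<^sup>2)))"
      using a by (intro integrable_mult_right gauss_poly) auto
  qed
  then show ?thesis by (simp add: HH1_def[abs_def] HH2_def)
qed

lemma HH_meas[measurable]:
  fixes A :: "'a::euclidean_space set"
  assumes A: "A \<in> sets lborel"
  shows "HH A \<in> borel_measurable borel" "HH1 A \<in> borel_measurable borel" "HH2 A \<in> borel_measurable borel"
  unfolding HH_def[abs_def] HH1_def[abs_def] HH2_def[abs_def] using A by measurable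

definition "FF1 (y::'a::euclidean_space) = (2*pi) powr (- real DIM('a) / 2) * exp (- (norm y)\<^sup>2 / 2) * (real DIM('a) / 2 + (norm y)\<^sup>2 / 2)"
definition "FF2 (y::'a::euclidean_space) = (2*pi) powr (- real DIM('a) / 2) * exp (- (norm y)\<^sup>2 / 2) * ((real DIM('a) / 2 + (norm y)\<^sup>2 / 2)\<^sup>2 + real DIM('a) / 2)"

lemma FF_meas[measurable]: "FF1 \<in> borel_measurable borel" "FF2 \<in> borel_measurable borel"
  unfolding FF1_def[abs_def] FF2_def[abs_def] by measurable

lemma norm_sqrt_scale: "0 < a \<Longrightarrow> (norm (sqrt a *\<^sub>R y))\<^sup>2 = a * (norm y)\<^sup>2"
  by (simp add: power_mult_distrib)

lemma HH1_bound:
  fixes A :: "'a::euclidean_space set"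
  assumes A: "A \<in> sets lborel" and a: "0 < a"
  shows "\<bar>HH1 A a\<bar> \<le> (LINT z|lborel. FF1 (z::'a)) / a"
proof -
  let ?N = "real DIM('a)"
  let ?c = "(2*pi) powr (- ?N / 2) * a powr (?N / 2)"
  have eq: "gg a y * (?N / (2*a) + (norm y)\<^sup>2 / 2) = ?c * (exp (- (a/2) * (norm y)\<^sup>2) * (?N / (2*a) + 1/2 * (norm y)\<^sup>2 + 0 * ((norm y)\<^sup>2)\<^sup>2))" for y :: 'a
    by (simp add: gg_def algebra_simps)
  have iR: "integrable lborel (\<lambda>y::'a. gg a y * (?N / (2*a) + (norm y)\<^sup>2 / 2))"
    unfolding eq using a by (intro integrable_mult_right gauss_poly) auto
  have "\<bar>HH1 A a\<bar> \<le> (LINT y|lborel. \<bar>indicator A y * gg1 a y\<bar>)"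
    unfolding HH1_def by (rule integral_abs_bound)
  also have "\<dots> \<le> (LINT y|lborel. gg a (y::'a) * (?N / (2*a) + (norm y)\<^sup>2 / 2))"
  proof (rule Bochner_Integration.integral_mono)
    show "integrable lborel (\<lambda>y. \<bar>indicator A y * gg1 a y\<bar>)"
      using HH1_integrable[OF A a] by (rule integrable_abs)
    show "integrable lborel (\<lambda>y::'a. gg a y * (?N / (2*a) + (norm y)\<^sup>2 / 2))" by (rule iR)
    fix y :: 'a
    have "\<bar>indicator A y * gg1 a y\<bar> \<le> \<bar>gg1 a y\<bar>" by (simp add: indicator_def)
    also have "\<dots> = gg a y * \<bar>?N / (2*a) - (norm y)\<^sup>2 / 2\<bar>" unfolding gg1_def using gg_nonneg[of a y] by (simp add: abs_mult)
    also have "\<dots> \<le> gg a y * (?N / (2*a) + (norm y)\<^sup>2 / 2)"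
      using a gg_nonneg[of a y] by (intro mult_left_mono abs_triangle_ineq4[THEN order_trans]) auto
    finally show "\<bar>indicator A y * gg1 a y\<bar> \<le> gg a y * (?N / (2*a) + (norm y)\<^sup>2 / 2)" .
  qed
  also have "\<dots> = (LINT (y::'a)|lborel. (1/a) * (a powr (?N/2) * FF1 (sqrt a *\<^sub>R y)))"
  proof (rule Bochner_Integration.integral_cong[OF refl])
    fix y :: 'a
    show "gg a y * (?N / (2*a) + (norm y)\<^sup>2 / 2) = (1/a) * (a powr (?N/2) * FF1 (sqrt a *\<^sub>R y))"
      unfolding FF1_def gg_def norm_sqrt_scale[OF a] using a by (simp add: field_simps)
  qed
  also have "\<dots> = (1/a) * (LINT (y::'a)|lborel. a powr (?N/2) * FF1 (sqrt a *\<^sub>R y))" by simp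
  also have "\<dots> = (1/a) * (LINT z|lborel. FF1 (z::'a))" using lborel_integral_scale[where 'a='a, OF a, of FF1] by simp
  finally show ?thesis by simp
qed

lemma HH2_bound:
  fixes A :: "'a::euclidean_space set"
  assumes A: "A \<in> sets lborel" and a: "0 < a"
  shows "\<bar>HH2 A a\<bar> \<le> (LINT z|lborel. FF2 (z::'a)) / a\<^sup>2"
proof -
  let ?N = "real DIM('a)"
  let ?c = "(2*pi) powr (- ?N / 2) * a powr (?N / 2)"
  have eq: "gg a y * ((?N / (2*a) + (norm y)\<^sup>2 / 2)\<^sup>2 + ?N / (2*a\<^sup>2)) = ?c * (exp (- (a/2) * (norm y)\<^sup>2) *
     (((?N / (2*a))\<^sup>2 + ?N / (2*a\<^sup>2)) + (?N / (2*a)) * (norm y)\<^sup>2 + 1/4 * ((norm y)\<^sup>2)\<^sup>2))" for y :: 'a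
    by (simp add: gg_def algebra_simps power2_eq_square)
  have iR: "integrable lborel (\<lambda>y::'a. gg a y * ((?N / (2*a) + (norm y)\<^sup>2 / 2)\<^sup>2 + ?N / (2*a\<^sup>2)))"
    unfolding eq using a by (intro integrable_mult_right gauss_poly) auto
  have iL: "integrable lborel (\<lambda>y. indicator A y * gg2 a y)"
  proof (rule Bochner_Integration.integrable_bound[OF iR])
    show "(\<lambda>y. indicator A y * gg2 a y) \<in> borel_measurable lborel" using A by measurable
    show "AE y in lborel. norm (indicator A y * gg2 a y) \<le> norm (gg a y * ((?N / (2*a) + (norm y)\<^sup>2 / 2)\<^sup>2 + ?N / (2*a\<^sup>2)))"
    proof (rule AE_I2)
      fix y :: 'a
      have "\<bar>indicator A y * gg2 a y\<bar> \<le> \<bar>gg2 a y\<bar>" by (simp add: indicator_def)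
      also have "\<dots> = gg a y * \<bar>(?N / (2*a) - (norm y)\<^sup>2 / 2)\<^sup>2 - ?N / (2*a\<^sup>2)\<bar>" unfolding gg2_def using gg_nonneg[of a y] by (simp add: abs_mult)
      also have "\<dots> \<le> gg a y * ((?N / (2*a) + (norm y)\<^sup>2 / 2)\<^sup>2 + ?N / (2*a\<^sup>2))"
      proof (intro mult_left_mono gg_nonneg abs_triangle_ineq4[THEN order_trans] add_mono)
        have "\<bar>?N / (2*a) - (norm y)\<^sup>2 / 2\<bar> \<le> ?N / (2*a) + (norm y)\<^sup>2 / 2"
          using a by (intro abs_triangle_ineq4[THEN order_trans]) auto
        then have "\<bar>?N / (2*a) - (norm y)\<^sup>2 / 2\<bar>\<^sup>2 \<le> (?N / (2*a) + (norm y)\<^sup>2 / 2)\<^sup>2"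
          by (rule power_mono) simp
        then show "\<bar>(?N / (2*a) - (norm y)\<^sup>2 / 2)\<^sup>2\<bar> \<le> (?N / (2*a) + (norm y)\<^sup>2 / 2)\<^sup>2"
          by simp
      qed auto
      finally show "norm (indicator A y * gg2 a y) \<le> norm (gg a y * ((?N / (2*a) + (norm y)\<^sup>2 / 2)\<^sup>2 + ?N / (2*a\<^sup>2)))"
        using gg_nonneg[of a y] a by simp
    qed
  qed
  have "\<bar>HH2 A a\<bar> \<le> (LINT y|lborel. \<bar>indicator A y * gg2 a y\<bar>)"
    unfolding HH2_def by (rule integral_abs_bound)
  also have "\<dots> \<le> (LINT y|lborel. gg a (y::'a) * ((?N / (2*a) + (norm y)\<^sup>2 / 2)\<^sup>2 + ?N / (2*a\<^sup>2)))"
  proof (rule Bochner_Integration.integral_mono)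
    show "integrable lborel (\<lambda>y. \<bar>indicator A y * gg2 a y\<bar>)" using iL by (rule integrable_abs)
    show "integrable lborel (\<lambda>y::'a. gg a y * ((?N / (2*a) + (norm y)\<^sup>2 / 2)\<^sup>2 + ?N / (2*a\<^sup>2)))" by (rule iR)
    fix y :: 'a
    have "\<bar>indicator A y * gg2 a y\<bar> \<le> \<bar>gg2 a y\<bar>" by (simp add: indicator_def)
    also have "\<dots> = gg a y * \<bar>(?N / (2*a) - (norm y)\<^sup>2 / 2)\<^sup>2 - ?N / (2*a\<^sup>2)\<bar>" unfolding gg2_def using gg_nonneg[of a y] by (simp add: abs_mult)
    also have "\<dots> \<le> gg a y * ((?N / (2*a) + (norm y)\<^sup>2 / 2)\<^sup>2 + ?N / (2*a\<^sup>2))"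
    proof (intro mult_left_mono gg_nonneg abs_triangle_ineq4[THEN order_trans] add_mono)
      have "\<bar>?N / (2*a) - (norm y)\<^sup>2 / 2\<bar> \<le> ?N / (2*a) + (norm y)\<^sup>2 / 2"
        using a by (intro abs_triangle_ineq4[THEN order_trans]) auto
      then have "\<bar>?N / (2*a) - (norm y)\<^sup>2 / 2\<bar>\<^sup>2 \<le> (?N / (2*a) + (norm y)\<^sup>2 / 2)\<^sup>2"
        by (rule power_mono) simp
      then show "\<bar>(?N / (2*a) - (norm y)\<^sup>2 / 2)\<^sup>2\<bar> \<le> (?N / (2*a) + (norm y)\<^sup>2 / 2)\<^sup>2"
        by simp
    qed auto
    finally show "\<bar>indicator A y * gg2 a y\<bar> \<le> gg a y * ((?N / (2*a) + (norm y)\<^sup>2 / 2)\<^sup>2 + ?N / (2*a\<^sup>2))" .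
  qed
  also have "\<dots> = (LINT (y::'a)|lborel. (1/a\<^sup>2) * (a powr (?N/2) * FF2 (sqrt a *\<^sub>R y)))"
  proof (rule Bochner_Integration.integral_cong[OF refl])
    fix y :: 'a
    show "gg a y * ((?N / (2*a) + (norm y)\<^sup>2 / 2)\<^sup>2 + ?N / (2*a\<^sup>2)) = (1/a\<^sup>2) * (a powr (?N/2) * FF2 (sqrt a *\<^sub>R y))"
      unfolding FF2_def gg_def norm_sqrt_scale[OF a] using a by (simp add: field_simps power2_eq_square)
  qed
  also have "\<dots> = (1/a\<^sup>2) * (LINT (y::'a)|lborel. a powr (?N/2) * FF2 (sqrt a *\<^sub>R y))" by simp
  also have "\<dots> = (1/a\<^sup>2) * (LINT z|lborel. FF2 (z::'a))" using lborel_integral_scale[where 'a='a, OF a, of FF2] by simp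
  finally show ?thesis by simp
qed

definition QQ :: "real \<Rightarrow> 'a::euclidean_space \<Rightarrow> real" where
  "QQ a y = (a * gg1 a y - gg a y) / (2 * a\<^sup>2)"

lemma QQ_meas[measurable]: "QQ a \<in> borel_measurable borel"
  unfolding QQ_def[abs_def] by measurable

lemma QQ_alt: "0 < a \<Longrightarrow> QQ a (y::'a::euclidean_space) = gg a y * (real DIM('a) - 2 - a * (norm y)\<^sup>2) / (4 * a\<^sup>2)"
  unfolding QQ_def gg1_def by (simp add: field_simps power2_eq_square)

lemma sq_powr: assumes l: "0 < l" shows "(l\<^sup>2) powr (real n / 2) = l ^ n"
proof -
  have "l\<^sup>2 = l powr 2" using l by (simp add: powr_numeral)
  then have "(l\<^sup>2) powr (real n / 2) = l powr (real n)" by (simp add: powr_powr)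
  then show ?thesis using l by (simp add: powr_realpow)
qed

lemma QQ_scale_aux:
  fixes l a K E X :: real
  assumes "l \<noteq> 0" "a \<noteq> 0"
  shows "l ^ n * (K * E * X / (4 * a\<^sup>2)) = l ^ 4 * (K * l ^ n * E * X / (4 * (a * l\<^sup>2)\<^sup>2))"
proof -
  have l4: "(l\<^sup>2)\<^sup>2 = l ^ 4" by (simp flip: power_mult)
  have "(a * l\<^sup>2)\<^sup>2 = a\<^sup>2 * l ^ 4" by (simp add: power_mult_distrib l4)
  then show ?thesis using assms by (simp add: field_simps)
qed

lemma QQ_scale:
  assumes a: "0 < a" and l: "0 < l"
  shows "l ^ DIM('a) * QQ a (l *\<^sub>R y) = l ^ 4 * QQ (a * l\<^sup>2) (y::'a::euclidean_space)"
proof -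
  have al: "0 < a * l\<^sup>2" using a l by simp
  have p: "(a * l\<^sup>2) powr (real DIM('a) / 2) = a powr (real DIM('a) / 2) * l ^ DIM('a)"
    using a l by (simp add: powr_mult sq_powr)
  have n: "(norm (l *\<^sub>R y))\<^sup>2 = l\<^sup>2 * (norm y)\<^sup>2" using l by (simp add: power_mult_distrib)
  have e: "a * (l\<^sup>2 * (norm y)\<^sup>2) = a * l\<^sup>2 * (norm y)\<^sup>2" by simp
  show ?thesis
    unfolding QQ_alt[OF a] QQ_alt[OF al] gg_def p n e
    using QQ_scale_aux[where l=l and a=a and K="(2*pi) powr (- real DIM('a) / 2) * a powr (real DIM('a) / 2)"
        and E="exp (- (a * l\<^sup>2 * (norm y)\<^sup>2) / 2)" and X="real DIM('a) - 2 - a * l\<^sup>2 * (norm y)\<^sup>2" and n="DIM('a)"] a l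
    by (simp add: mult.assoc)
qed

lemma QQ_integrable: "0 < a \<Longrightarrow> integrable lborel (QQ a :: 'a::euclidean_space \<Rightarrow> real)"
proof -
  assume a: "0 < a"
  have "integrable lborel (\<lambda>y::'a. indicator UNIV y * gg1 a y)" by (rule HH1_integrable) (use a in auto)
  then have "integrable lborel (\<lambda>y::'a. (a * gg1 a y - gg a y) / (2 * a\<^sup>2))"
    using gg_integrable[OF a, where 'a='a] by (intro integrable_divide Bochner_Integration.integrable_diff integrable_mult_right) auto
  then show ?thesis by (simp add: QQ_def[abs_def])
qed

definition JJ :: "'a::euclidean_space set \<Rightarrow> real \<Rightarrow> real \<Rightarrow> real" where
  "JJ A a l = (a * l\<^sup>2 * HH1 A (a * l\<^sup>2) - HH A (a * l\<^sup>2)) / (2 * a\<^sup>2)"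

lemma JJ_integral:
  fixes A :: "'a::euclidean_space set"
  assumes A: "A \<in> sets lborel" and a: "0 < a" and l: "0 < l"
  shows "JJ A a l = (LINT z|lborel. indicator A ((1/l) *\<^sub>R z) * QQ a z)"
proof -
  let ?b = "a * l\<^sup>2"
  have b: "0 < ?b" using a l by simp
  have "(LINT z|lborel. indicator A ((1/l) *\<^sub>R z) * QQ a z) =
      \<bar>l\<bar> ^ DIM('a) * (LINT y|lborel. indicator A ((1/l) *\<^sub>R (0 + l *\<^sub>R y)) * QQ a (0 + l *\<^sub>R y))"
    using l A by (intro lborel_integral_affine_euclid) auto
  also have "\<dots> = (LINT y|lborel. l ^ DIM('a) * (indicator A y * QQ a (l *\<^sub>R y)))"
    using l by simp
  also have "\<dots> = (LINT y|lborel. l ^ 4 * (indicator A y * QQ ?b y))"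
  proof (rule Bochner_Integration.integral_cong[OF refl])
    fix y :: 'a
    show "l ^ DIM('a) * (indicator A y * QQ a (l *\<^sub>R y)) = l ^ 4 * (indicator A y * QQ ?b y)"
      using QQ_scale[OF a l, of y] by (simp add: mult.left_commute)
  qed
  also have "\<dots> = l ^ 4 * (LINT y|lborel. indicator A y * QQ ?b y)" by simp
  also have "(LINT y|lborel. indicator A y * QQ ?b y) = (LINT y|lborel. (?b * (indicator A y * gg1 ?b y) - indicator A y * gg ?b y) / (2 * ?b\<^sup>2))"
    by (simp add: QQ_def algebra_simps)
  also have "\<dots> = (?b * HH1 A ?b - HH A ?b) / (2 * ?b\<^sup>2)"
    using HH1_integrable[OF A b] integrable_mult_indicator[OF A gg_integrable[OF b]]
    by (simp add: HH1_def HH_def)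
  finally have I: "(LINT z|lborel. indicator A ((1/l) *\<^sub>R z) * QQ a z) = l ^ 4 * ((?b * HH1 A ?b - HH A ?b) / (2 * ?b\<^sup>2))" .
  have l4: "(l\<^sup>2)\<^sup>2 = l ^ 4" by (simp flip: power_mult)
  have "?b\<^sup>2 = a\<^sup>2 * l ^ 4" by (simp add: power_mult_distrib l4)
  then have "l ^ 4 * (X / (2 * ?b\<^sup>2)) = X / (2 * a\<^sup>2)" for X using a l by (simp add: field_simps)
  then show ?thesis unfolding JJ_def I by simp
qed

lemma JJ_deriv:
  fixes A :: "'a::euclidean_space set"
  assumes A: "A \<in> sets lborel" and a: "0 < a"
  shows "(JJ A a has_real_derivative HH2 A a) (at 1)"
proof -
  have g: "((\<lambda>l. a * l\<^sup>2) has_real_derivative 2 * a) (at 1)"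
    by (auto intro!: derivative_eq_intros)
  have h: "((\<lambda>l. HH A (a * l\<^sup>2)) has_real_derivative HH1 A a * (2 * a)) (at 1)"
    using DERIV_chain2[OF HH_deriv[OF A, of "a * 1\<^sup>2"] g] a by simp
  have h1: "((\<lambda>l. HH1 A (a * l\<^sup>2)) has_real_derivative HH2 A a * (2 * a)) (at 1)"
    using DERIV_chain2[OF HH1_deriv[OF A, of "a * 1\<^sup>2"] g] a by simp
  have "((\<lambda>l. ((a * l\<^sup>2) * HH1 A (a * l\<^sup>2) - HH A (a * l\<^sup>2)) / (2 * a\<^sup>2)) has_real_derivative
      ((a * 1\<^sup>2) * (HH2 A a * (2 * a)) + (2 * a) * HH1 A (a * 1\<^sup>2) - HH1 A a * (2 * a)) / (2 * a\<^sup>2)) (at 1)"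
    by (intro DERIV_cdivide DERIV_diff DERIV_mult' g h h1) 
  then show ?thesis unfolding JJ_def[abs_def] using a by (simp add: field_simps power2_eq_square)
qed

lemma ind_QQ_integrable:
  fixes A :: "'a::euclidean_space set"
  assumes A: "A \<in> sets lborel" and a: "0 < a"
  shows "integrable lborel (\<lambda>z. indicator A ((1/l) *\<^sub>R z) * QQ a z)"
proof (rule Bochner_Integration.integrable_bound[OF QQ_integrable[OF a]])
  show "(\<lambda>z. indicator A ((1/l) *\<^sub>R z) * QQ a z) \<in> borel_measurable lborel" using A by measurable
  show "AE z in lborel. norm (indicator A ((1/l) *\<^sub>R z) * QQ a (z::'a)) \<le> norm (QQ a z)"
    by (intro AE_I2) (simp add: indicator_def)
qed

lemma JJ_diff:
  fixes A :: "'a::euclidean_space set"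
  assumes A: "A \<in> sets lborel" and a: "0 < a" and l: "0 < l"
  shows "JJ A a l - JJ A a 1 = (LINT z|lborel. (indicator A ((1/l) *\<^sub>R z) - indicator A z) * QQ a z)"
proof -
  have "JJ A a l - JJ A a 1 = (LINT z|lborel. indicator A ((1/l) *\<^sub>R z) * QQ a z) - (LINT z|lborel. indicator A ((1/1) *\<^sub>R z) * QQ a z)"
    using JJ_integral[OF A a l] JJ_integral[OF A a, of 1] by simp
  also have "\<dots> = (LINT z|lborel. indicator A ((1/l) *\<^sub>R z) * QQ a z - indicator A ((1/1) *\<^sub>R z) * QQ a z)"
    by (rule Bochner_Integration.integral_diff[symmetric]) (intro ind_QQ_integrable A a)+
  finally show ?thesis by (simp add: algebra_simps)
qed

lemma HH2_nonpos:
  fixes A :: "'a::euclidean_space set"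
  assumes A: "A \<in> sets lborel" and a: "0 < a"
    and star: "\<And>y \<mu>. y \<in> A \<Longrightarrow> 0 \<le> \<mu> \<Longrightarrow> \<mu> \<le> 1 \<Longrightarrow> \<mu> *\<^sub>R y \<in> A"
    and inner: "\<And>z. z \<notin> A \<Longrightarrow> real DIM('a) - 2 \<le> a * (norm z)\<^sup>2"
  shows "HH2 A a \<le> 0"
proof (rule ccontr)
  assume "\<not> HH2 A a \<le> 0"
  then have "0 < HH2 A a" by simp
  from DERIV_pos_inc_right[OF JJ_deriv[OF A a] this]
  obtain d where d: "0 < d" "\<And>h. 0 < h \<Longrightarrow> h < d \<Longrightarrow> JJ A a 1 < JJ A a (1 + h)" by blast
  define l where "l = 1 + d/2"
  have l: "1 < l" using d by (simp add: l_def)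
  have lt: "JJ A a 1 < JJ A a l" using d(2)[of "d/2"] d by (simp add: l_def)
  have "JJ A a l - JJ A a 1 = (LINT z|lborel. (indicator A ((1/l) *\<^sub>R z) - indicator A z) * QQ a z)"
    using JJ_diff[OF A a, of l] l by simp
  also have "\<dots> \<le> (LINT (z::'a)|lborel. (0::real))"
  proof (rule Bochner_Integration.integral_mono)
    show "integrable lborel (\<lambda>z. (indicator A ((1/l) *\<^sub>R z) - indicator A z) * QQ a (z::'a))"
      using ind_QQ_integrable[OF A a, of l] ind_QQ_integrable[OF A a, of 1]
      by (simp add: left_diff_distrib Bochner_Integration.integrable_diff)
    fix z :: 'a
    show "(indicator A ((1/l) *\<^sub>R z) - indicator A z) * QQ a z \<le> 0"
    proof (cases "z \<in> A")
      case True
      then have "(1/l) *\<^sub>R z \<in> A" using l by (intro star) auto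
      with True show ?thesis by simp
    next
      case False
      have "QQ a z \<le> 0" unfolding QQ_alt[OF a] using inner[OF False] gg_nonneg[of a z] a
        by (intro divide_nonpos_pos mult_nonneg_nonpos) auto
      then show ?thesis using False by (simp add: indicator_def mult_nonneg_nonpos)
    qed
  qed simp
  finally show False using lt by simp
qed

lemma HH2_nonneg:
  fixes A :: "'a::euclidean_space set"
  assumes A: "A \<in> sets lborel" and a: "0 < a"
    and star: "\<And>y \<mu>. y \<in> A \<Longrightarrow> 0 \<le> \<mu> \<Longrightarrow> \<mu> \<le> 1 \<Longrightarrow> \<mu> *\<^sub>R y \<in> A"
    and outer: "\<And>z \<mu>. z \<in> A \<Longrightarrow> 1 < \<mu> \<Longrightarrow> \<mu> *\<^sub>R z \<notin> A \<Longrightarrow> a * (norm z)\<^sup>2 \<le> real DIM('a) - 2"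
  shows "0 \<le> HH2 A a"
proof (rule ccontr)
  assume "\<not> 0 \<le> HH2 A a"
  then have "HH2 A a < 0" by simp
  from DERIV_neg_dec_left[OF JJ_deriv[OF A a] this]
  obtain d where d: "0 < d" "\<And>h. 0 < h \<Longrightarrow> h < d \<Longrightarrow> JJ A a 1 < JJ A a (1 - h)" by blast
  define h where "h = min (d/2) (1/2)"
  define l where "l = 1 - h"
  have h: "0 < h" "h < d" "h \<le> 1/2" using d by (auto simp: h_def)
  have l: "0 < l" "l < 1" using h by (auto simp: l_def)
  have lt: "JJ A a 1 < JJ A a l" using d(2)[OF h(1,2)] by (simp add: l_def)
  have "JJ A a l - JJ A a 1 = (LINT z|lborel. (indicator A ((1/l) *\<^sub>R z) - indicator A z) * QQ a z)"
    using JJ_diff[OF A a l(1)] by simp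
  also have "\<dots> \<le> (LINT (z::'a)|lborel. (0::real))"
  proof (rule Bochner_Integration.integral_mono)
    show "integrable lborel (\<lambda>z. (indicator A ((1/l) *\<^sub>R z) - indicator A z) * QQ a (z::'a))"
      using ind_QQ_integrable[OF A a, of l] ind_QQ_integrable[OF A a, of 1]
      by (simp add: left_diff_distrib Bochner_Integration.integrable_diff)
    fix z :: 'a
    show "(indicator A ((1/l) *\<^sub>R z) - indicator A z) * QQ a z \<le> 0"
    proof (cases "(1/l) *\<^sub>R z \<in> A")
      case True
      have "l *\<^sub>R ((1/l) *\<^sub>R z) \<in> A" using star[OF True, of l] l by simp
      then have zA: "z \<in> A" using l by simp
      show ?thesis using True zA by simp
    next
      case False
      show ?thesis
      proof (cases "z \<in> A")
        case zA: True
        have "1 < 1/l" using l by simp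
        from outer[OF zA this False] have "0 \<le> QQ a z" unfolding QQ_alt[OF a]
          using gg_nonneg[of a z] a by (intro divide_nonneg_pos mult_nonneg_nonneg) auto
        then show ?thesis using False zA by simp
      next
        case False': False
        then show ?thesis using False by simp
      qed
    qed
  qed simp
  finally show False using lt by simp
qed

definition "FF0 (y::'a::euclidean_space) = (2*pi) powr (- real DIM('a) / 2) * exp (- (norm y)\<^sup>2 / 2)"

lemma FF0_meas[measurable]: "FF0 \<in> borel_measurable borel"
  unfolding FF0_def[abs_def] by measurable

lemma HH_bound:
  fixes A :: "'a::euclidean_space set"
  assumes A: "A \<in> sets lborel" and a: "0 < a"
  shows "\<bar>HH A a\<bar> \<le> (LINT z|lborel. FF0 (z::'a))"
proof -
  have "\<bar>HH A a\<bar> \<le> (LINT y|lborel. \<bar>indicator A y * gg a y\<bar>)"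
    unfolding HH_def by (rule integral_abs_bound)
  also have "\<dots> \<le> (LINT y|lborel. gg a (y::'a))"
  proof (rule Bochner_Integration.integral_mono)
    show "integrable lborel (\<lambda>y. \<bar>indicator A y * gg a y\<bar>)"
      using integrable_mult_indicator[OF A gg_integrable[OF a]] by (intro integrable_abs) simp
    show "integrable lborel (\<lambda>y::'a. gg a y)" using gg_integrable[OF a] by simp
    fix y :: 'a show "\<bar>indicator A y * gg a y\<bar> \<le> gg a y" using gg_nonneg[of a y] by (simp add: indicator_def)
  qed
  also have "\<dots> = (LINT (y::'a)|lborel. a powr (real DIM('a)/2) * FF0 (sqrt a *\<^sub>R y))"
  proof (rule Bochner_Integration.integral_cong[OF refl])
    fix y :: 'a
    show "gg a y = a powr (real DIM('a)/2) * FF0 (sqrt a *\<^sub>R y)"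
      unfolding FF0_def gg_def norm_sqrt_scale[OF a] by simp
  qed
  also have "\<dots> = (LINT z|lborel. FF0 (z::'a))" using lborel_integral_scale[where 'a='a, OF a, of FF0] by simp
  finally show ?thesis .
qed

definition PHI :: "(real \<Rightarrow> real) \<Rightarrow> 'a::euclidean_space set \<Rightarrow> real \<Rightarrow> real" where
  "PHI f A q = (LINT \<sigma>|lborel. indicator {0<..} \<sigma> * f \<sigma> * HH A (q / \<sigma>\<^sup>2))"
definition PHI1 :: "(real \<Rightarrow> real) \<Rightarrow> 'a::euclidean_space set \<Rightarrow> real \<Rightarrow> real" where
  "PHI1 f A q = (LINT \<sigma>|lborel. indicator {0<..} \<sigma> * f \<sigma> * (HH1 A (q / \<sigma>\<^sup>2) / \<sigma>\<^sup>2))"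
definition PHI2 :: "(real \<Rightarrow> real) \<Rightarrow> 'a::euclidean_space set \<Rightarrow> real \<Rightarrow> real" where
  "PHI2 f A q = (LINT \<sigma>|lborel. indicator {0<..} \<sigma> * f \<sigma> * (HH2 A (q / \<sigma>\<^sup>2) / \<sigma>\<^sup>2 ^ 2))"

context
  fixes f :: "real \<Rightarrow> real" and A :: "'a::euclidean_space set"
  assumes f_nn: "\<And>\<sigma>. 0 \<le> f \<sigma>" and f_int: "integrable lborel f" and A: "A \<in> sets lborel"
begin

lemma f_meas[measurable]: "f \<in> borel_measurable borel"
  using f_int by (simp add: borel_measurable_integrable)

lemma C_nonneg: "0 \<le> (LINT z|lborel. FF0 (z::'a))" "0 \<le> (LINT z|lborel. FF1 (z::'a))" "0 \<le> (LINT z|lborel. FF2 (z::'a))"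
  using HH_bound[OF A, of 1] HH1_bound[OF A, of 1] HH2_bound[OF A, of 1] by auto

lemma PHI_deriv:
  assumes q: "0 < q"
  shows "(PHI f A has_real_derivative PHI1 f A q) (at q)"
proof -
  define C0 where "C0 = (LINT z|lborel. FF0 (z::'a))"
  define C1 where "C1 = (LINT z|lborel. FF1 (z::'a))"
  have C: "0 \<le> C0" "0 \<le> C1" using C_nonneg by (auto simp: C0_def C1_def)
  have "((\<lambda>t. LINT \<sigma>|lborel. indicator {0<..} \<sigma> * f \<sigma> * HH A (t / \<sigma>\<^sup>2)) has_real_derivative
      (LINT \<sigma>|lborel. indicator {0<..} \<sigma> * f \<sigma> * (HH1 A (q / \<sigma>\<^sup>2) / \<sigma>\<^sup>2))) (at q)"
  proof (rule deriv_under_integral[where e="q/2" and B="\<lambda>\<sigma>. f \<sigma> * (2 * C1 / q)"])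
    show "0 < q/2" using q by simp
    fix t \<sigma> assume t: "t \<in> ball q (q/2)"
    then have t0: "q/2 < t" "0 < t" using ballD[OF q t] by auto
    show "((\<lambda>t. indicator {0<..} \<sigma> * f \<sigma> * HH A (t / \<sigma>\<^sup>2)) has_real_derivative
        indicator {0<..} \<sigma> * f \<sigma> * (HH1 A (t / \<sigma>\<^sup>2) / \<sigma>\<^sup>2)) (at t)"
    proof (cases "0 < \<sigma>")
      case True
      have "((\<lambda>t. t / \<sigma>\<^sup>2) has_real_derivative 1 / \<sigma>\<^sup>2) (at t)"
        by (rule DERIV_cdivide[OF DERIV_ident])
      from DERIV_chain2[OF HH_deriv[OF A] this] True t0
      have "((\<lambda>t. HH A (t / \<sigma>\<^sup>2)) has_real_derivative HH1 A (t / \<sigma>\<^sup>2) * (1 / \<sigma>\<^sup>2)) (at t)" by simp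
      then show ?thesis by (intro DERIV_cmult) simp
    qed simp
    show "\<bar>indicator {0<..} \<sigma> * f \<sigma> * (HH1 A (t / \<sigma>\<^sup>2) / \<sigma>\<^sup>2)\<bar> \<le> f \<sigma> * (2 * C1 / q)"
    proof (cases "0 < \<sigma>")
      case True
      then have a: "0 < t / \<sigma>\<^sup>2" using t0 by simp
      have h: "\<bar>HH1 A (t / \<sigma>\<^sup>2)\<bar> \<le> C1 / (t / \<sigma>\<^sup>2)" using HH1_bound[OF A a] by (simp add: C1_def)
      have "\<bar>HH1 A (t / \<sigma>\<^sup>2) / \<sigma>\<^sup>2\<bar> = \<bar>HH1 A (t / \<sigma>\<^sup>2)\<bar> / \<sigma>\<^sup>2" by (simp add: abs_divide)
      also have "\<dots> \<le> (C1 / (t / \<sigma>\<^sup>2)) / \<sigma>\<^sup>2" by (rule divide_right_mono[OF h]) simp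
      also have "\<dots> = C1 / t" using True by (simp add: field_simps)
      also have "\<dots> \<le> 2 * C1 / q" using t0 q C by (simp add: field_simps mult_left_mono)
      finally have F: "\<bar>HH1 A (t / \<sigma>\<^sup>2) / \<sigma>\<^sup>2\<bar> \<le> 2 * C1 / q" .
      have "\<bar>indicator {0<..} \<sigma> * f \<sigma> * (HH1 A (t / \<sigma>\<^sup>2) / \<sigma>\<^sup>2)\<bar> = f \<sigma> * \<bar>HH1 A (t / \<sigma>\<^sup>2) / \<sigma>\<^sup>2\<bar>"
        using True f_nn[of \<sigma>] by (simp add: abs_mult)
      also have "\<dots> \<le> f \<sigma> * (2 * C1 / q)" by (rule mult_left_mono[OF F f_nn])
      finally show ?thesis .
    qed (use f_nn C q in simp)
  next
    fix t show "(\<lambda>\<sigma>. indicator {0<..} \<sigma> * f \<sigma> * HH A (t / \<sigma>\<^sup>2)) \<in> borel_measurable lborel"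
      using A by measurable
  next
    show "(\<lambda>\<sigma>. indicator {0<..} \<sigma> * f \<sigma> * (HH1 A (q / \<sigma>\<^sup>2) / \<sigma>\<^sup>2)) \<in> borel_measurable lborel"
      using A by measurable
    show "integrable lborel (\<lambda>\<sigma>. f \<sigma> * (2 * C1 / q))" using f_int by simp
    show "integrable lborel (\<lambda>\<sigma>. indicator {0<..} \<sigma> * f \<sigma> * HH A (q / \<sigma>\<^sup>2))"
    proof (rule Bochner_Integration.integrable_bound[OF integrable_mult_right[OF f_int, of C0]])
      show "(\<lambda>\<sigma>. indicator {0<..} \<sigma> * f \<sigma> * HH A (q / \<sigma>\<^sup>2)) \<in> borel_measurable lborel" using A by measurable
      show "AE \<sigma> in lborel. norm (indicator {0<..} \<sigma> * f \<sigma> * HH A (q / \<sigma>\<^sup>2)) \<le> norm (C0 * f \<sigma>)"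
      proof (rule AE_I2)
        fix \<sigma> :: real
        show "norm (indicator {0<..} \<sigma> * f \<sigma> * HH A (q / \<sigma>\<^sup>2)) \<le> norm (C0 * f \<sigma>)"
        proof (cases "0 < \<sigma>")
          case True
          then have "\<bar>HH A (q / \<sigma>\<^sup>2)\<bar> \<le> C0" using HH_bound[OF A, of "q / \<sigma>\<^sup>2"] q by (simp add: C0_def)
          then have "f \<sigma> * \<bar>HH A (q / \<sigma>\<^sup>2)\<bar> \<le> f \<sigma> * C0" by (rule mult_left_mono) (rule f_nn)
          then show ?thesis using True f_nn[of \<sigma>] C by (simp add: abs_mult mult.commute)
        qed simp
      qed
    qed
  qed
  then show ?thesis by (simp add: PHI_def[abs_def] PHI1_def)
qed

lemma PHI1_deriv:
  assumes q: "0 < q"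
  shows "(PHI1 f A has_real_derivative PHI2 f A q) (at q)"
proof -
  define C1 where "C1 = (LINT z|lborel. FF1 (z::'a))"
  define C2 where "C2 = (LINT z|lborel. FF2 (z::'a))"
  have C: "0 \<le> C1" "0 \<le> C2" using C_nonneg by (auto simp: C1_def C2_def)
  have "((\<lambda>t. LINT \<sigma>|lborel. indicator {0<..} \<sigma> * f \<sigma> * (HH1 A (t / \<sigma>\<^sup>2) / \<sigma>\<^sup>2)) has_real_derivative
      (LINT \<sigma>|lborel. indicator {0<..} \<sigma> * f \<sigma> * (HH2 A (q / \<sigma>\<^sup>2) / \<sigma>\<^sup>2 ^ 2))) (at q)"
  proof (rule deriv_under_integral[where e="q/2" and B="\<lambda>\<sigma>. f \<sigma> * (4 * C2 / q\<^sup>2)"])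
    show "0 < q/2" using q by simp
    fix t \<sigma> assume t: "t \<in> ball q (q/2)"
    then have t0: "q/2 < t" "0 < t" using ballD[OF q t] by auto
    show "((\<lambda>t. indicator {0<..} \<sigma> * f \<sigma> * (HH1 A (t / \<sigma>\<^sup>2) / \<sigma>\<^sup>2)) has_real_derivative
        indicator {0<..} \<sigma> * f \<sigma> * (HH2 A (t / \<sigma>\<^sup>2) / \<sigma>\<^sup>2 ^ 2)) (at t)"
    proof (cases "0 < \<sigma>")
      case True
      have "((\<lambda>t. t / \<sigma>\<^sup>2) has_real_derivative 1 / \<sigma>\<^sup>2) (at t)"
        by (rule DERIV_cdivide[OF DERIV_ident])
      from DERIV_chain2[OF HH1_deriv[OF A] this] True t0
      have "((\<lambda>t. HH1 A (t / \<sigma>\<^sup>2)) has_real_derivative HH2 A (t / \<sigma>\<^sup>2) * (1 / \<sigma>\<^sup>2)) (at t)" by simp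
      then have "((\<lambda>t. HH1 A (t / \<sigma>\<^sup>2) / \<sigma>\<^sup>2) has_real_derivative HH2 A (t / \<sigma>\<^sup>2) * (1 / \<sigma>\<^sup>2) / \<sigma>\<^sup>2) (at t)"
        by (rule DERIV_cdivide)
      then show ?thesis by (intro DERIV_cmult) (simp add: power2_eq_square)
    qed simp
    show "\<bar>indicator {0<..} \<sigma> * f \<sigma> * (HH2 A (t / \<sigma>\<^sup>2) / \<sigma>\<^sup>2 ^ 2)\<bar> \<le> f \<sigma> * (4 * C2 / q\<^sup>2)"
    proof (cases "0 < \<sigma>")
      case True
      then have a: "0 < t / \<sigma>\<^sup>2" using t0 by simp
      have h: "\<bar>HH2 A (t / \<sigma>\<^sup>2)\<bar> \<le> C2 / (t / \<sigma>\<^sup>2)\<^sup>2" using HH2_bound[OF A a] by (simp add: C2_def)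
      have "\<bar>HH2 A (t / \<sigma>\<^sup>2) / \<sigma>\<^sup>2 ^ 2\<bar> = \<bar>HH2 A (t / \<sigma>\<^sup>2)\<bar> / \<sigma>\<^sup>2 ^ 2" by (simp add: abs_divide)
      also have "\<dots> \<le> (C2 / (t / \<sigma>\<^sup>2)\<^sup>2) / \<sigma>\<^sup>2 ^ 2" by (rule divide_right_mono[OF h]) simp
      also have "\<dots> = C2 / t\<^sup>2" using True by (simp add: field_simps power2_eq_square)
      also have "\<dots> \<le> 4 * C2 / q\<^sup>2"
      proof -
        have "(q/2)\<^sup>2 \<le> t\<^sup>2" using t0 q by (intro power_mono) auto
        then have "q\<^sup>2 \<le> 4 * t\<^sup>2" by (simp add: power_divide)
        then show ?thesis using t0 q C by (simp add: field_simps mult_left_mono)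
      qed
      finally have F: "\<bar>HH2 A (t / \<sigma>\<^sup>2) / \<sigma>\<^sup>2 ^ 2\<bar> \<le> 4 * C2 / q\<^sup>2" .
      have "\<bar>indicator {0<..} \<sigma> * f \<sigma> * (HH2 A (t / \<sigma>\<^sup>2) / \<sigma>\<^sup>2 ^ 2)\<bar> = f \<sigma> * \<bar>HH2 A (t / \<sigma>\<^sup>2) / \<sigma>\<^sup>2 ^ 2\<bar>"
        using True f_nn[of \<sigma>] by (simp add: abs_mult)
      also have "\<dots> \<le> f \<sigma> * (4 * C2 / q\<^sup>2)" by (rule mult_left_mono[OF F f_nn])
      finally show ?thesis .
    qed (use f_nn C q in simp)
  next
    fix t show "(\<lambda>\<sigma>. indicator {0<..} \<sigma> * f \<sigma> * (HH1 A (t / \<sigma>\<^sup>2) / \<sigma>\<^sup>2)) \<in> borel_measurable lborel"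
      using A by measurable
  next
    show "(\<lambda>\<sigma>. indicator {0<..} \<sigma> * f \<sigma> * (HH2 A (q / \<sigma>\<^sup>2) / \<sigma>\<^sup>2 ^ 2)) \<in> borel_measurable lborel"
      using A by measurable
    show "integrable lborel (\<lambda>\<sigma>. f \<sigma> * (4 * C2 / q\<^sup>2))" using f_int by simp
    show "integrable lborel (\<lambda>\<sigma>. indicator {0<..} \<sigma> * f \<sigma> * (HH1 A (q / \<sigma>\<^sup>2) / \<sigma>\<^sup>2))"
    proof (rule Bochner_Integration.integrable_bound[OF integrable_mult_right[OF f_int, of "C1 / q"]])
      show "(\<lambda>\<sigma>. indicator {0<..} \<sigma> * f \<sigma> * (HH1 A (q / \<sigma>\<^sup>2) / \<sigma>\<^sup>2)) \<in> borel_measurable lborel" using A by measurable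
      show "AE \<sigma> in lborel. norm (indicator {0<..} \<sigma> * f \<sigma> * (HH1 A (q / \<sigma>\<^sup>2) / \<sigma>\<^sup>2)) \<le> norm (C1 / q * f \<sigma>)"
      proof (rule AE_I2)
        fix \<sigma> :: real
        show "norm (indicator {0<..} \<sigma> * f \<sigma> * (HH1 A (q / \<sigma>\<^sup>2) / \<sigma>\<^sup>2)) \<le> norm (C1 / q * f \<sigma>)"
        proof (cases "0 < \<sigma>")
          case True
          then have a: "0 < q / \<sigma>\<^sup>2" using q by simp
          have h: "\<bar>HH1 A (q / \<sigma>\<^sup>2)\<bar> \<le> C1 / (q / \<sigma>\<^sup>2)" using HH1_bound[OF A a] by (simp add: C1_def)
          have "\<bar>HH1 A (q / \<sigma>\<^sup>2) / \<sigma>\<^sup>2\<bar> = \<bar>HH1 A (q / \<sigma>\<^sup>2)\<bar> / \<sigma>\<^sup>2" by (simp add: abs_divide)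
          also have "\<dots> \<le> (C1 / (q / \<sigma>\<^sup>2)) / \<sigma>\<^sup>2" by (rule divide_right_mono[OF h]) simp
          also have "\<dots> = C1 / q" using True by (simp add: field_simps)
          finally have F: "\<bar>HH1 A (q / \<sigma>\<^sup>2) / \<sigma>\<^sup>2\<bar> \<le> C1 / q" .
          have "\<bar>indicator {0<..} \<sigma> * f \<sigma> * (HH1 A (q / \<sigma>\<^sup>2) / \<sigma>\<^sup>2)\<bar> = f \<sigma> * \<bar>HH1 A (q / \<sigma>\<^sup>2) / \<sigma>\<^sup>2\<bar>"
            using True f_nn[of \<sigma>] by (simp add: abs_mult)
          also have "\<dots> \<le> f \<sigma> * (C1 / q)" by (rule mult_left_mono[OF F f_nn])
          finally show ?thesis using f_nn[of \<sigma>] C q by (simp add: mult.commute)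
        qed simp
      qed
    qed
  qed
  then show ?thesis by (simp add: PHI1_def[abs_def] PHI2_def)
qed

lemma PHI2_nonneg:
  assumes "\<And>\<sigma>. 0 < \<sigma> \<Longrightarrow> f \<sigma> \<noteq> 0 \<Longrightarrow> 0 \<le> HH2 A (q / \<sigma>\<^sup>2)"
  shows "0 \<le> PHI2 f A q"
  unfolding PHI2_def
proof (rule Bochner_Integration.integral_nonneg)
  fix \<sigma> :: real
  show "0 \<le> indicator {0<..} \<sigma> * f \<sigma> * (HH2 A (q / \<sigma>\<^sup>2) / \<sigma>\<^sup>2 ^ 2)"
  proof (cases "0 < \<sigma> \<and> f \<sigma> \<noteq> 0")
    case True
    then show ?thesis using assms[of \<sigma>] f_nn[of \<sigma>] by simp
  next
    case False
    then show ?thesis by (auto simp: indicator_def)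
  qed
qed

lemma PHI2_nonpos:
  assumes "\<And>\<sigma>. 0 < \<sigma> \<Longrightarrow> f \<sigma> \<noteq> 0 \<Longrightarrow> HH2 A (q / \<sigma>\<^sup>2) \<le> 0"
  shows "PHI2 f A q \<le> 0"
proof -
  have "0 \<le> (LINT \<sigma>|lborel. - (indicator {0<..} \<sigma> * f \<sigma> * (HH2 A (q / \<sigma>\<^sup>2) / \<sigma>\<^sup>2 ^ 2)))"
  proof (rule Bochner_Integration.integral_nonneg)
    fix \<sigma> :: real
    show "0 \<le> - (indicator {0<..} \<sigma> * f \<sigma> * (HH2 A (q / \<sigma>\<^sup>2) / \<sigma>\<^sup>2 ^ 2))"
    proof (cases "0 < \<sigma> \<and> f \<sigma> \<noteq> 0")
      case True
      then have "f \<sigma> * (HH2 A (q / \<sigma>\<^sup>2) / \<sigma>\<^sup>2 ^ 2) \<le> 0"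
        using assms[of \<sigma>] f_nn[of \<sigma>] by (intro mult_nonneg_nonpos divide_nonpos_pos) auto
      then show ?thesis using True by simp
    next
      case False
      then show ?thesis by (auto simp: indicator_def)
    qed
  qed
  then show ?thesis unfolding PHI2_def by simp
qed

end

lemma gg_abs[simp]: "\<bar>gg a y\<bar> = gg a y" using gg_nonneg[of a y] by simp

lemma PHI_integrand_meas:
  fixes A :: "'a::euclidean_space set" and f :: "real \<Rightarrow> real"
  assumes fm: "f \<in> borel_measurable borel" and A: "A \<in> sets lborel"
  shows "(\<lambda>\<sigma>. indicator {0<..} \<sigma> * f \<sigma> * HH A (q / \<sigma>\<^sup>2)) \<in> borel_measurable lborel"
proof -
  have h: "HH A \<in> borel_measurable borel" using HH_meas(1)[OF A] .
  have d: "(\<lambda>\<sigma>::real. q / \<sigma>\<^sup>2) \<in> borel_measurable borel" by measurable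
  have "(\<lambda>\<sigma>. HH A (q / \<sigma>\<^sup>2)) \<in> borel_measurable borel" using measurable_compose[OF d h] by (simp add: comp_def)
  then have "(\<lambda>\<sigma>. indicator {0<..} \<sigma> * f \<sigma> * HH A (q / \<sigma>\<^sup>2)) \<in> borel_measurable borel"
    using fm by (intro borel_measurable_times) auto
  then show ?thesis by simp
qed
lemma sirp_meas[measurable]:
  assumes [measurable]: "f \<in> borel_measurable borel"
  shows "(sirp_density f :: 'a::euclidean_space \<Rightarrow> real) \<in> borel_measurable borel"
  unfolding sirp_density_def[abs_def] set_lebesgue_integral_def by measurable

lemma sirp_gg:
  fixes y :: "'a::euclidean_space"
  assumes p: "0 < p" and s: "0 < \<sigma>"
  shows "p powr (real DIM('a) / 2) * ((2 * pi * \<sigma>\<^sup>2) powr (- real DIM('a) / 2) * exp (- (norm (sqrt p *\<^sub>R y))\<^sup>2 / (2 * \<sigma>\<^sup>2)) * f \<sigma>)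
     = f \<sigma> * gg (p / \<sigma>\<^sup>2) y"
proof -
  let ?N = "real DIM('a)"
  have s2: "0 < \<sigma>\<^sup>2" using s by simp
  have a: "(2 * pi * \<sigma>\<^sup>2) powr (- ?N / 2) = (2 * pi) powr (- ?N / 2) / (\<sigma>\<^sup>2) powr (?N / 2)"
  proof -
    have e1: "(2 * pi * \<sigma>\<^sup>2) powr (- ?N / 2) = (2 * pi) powr (- ?N / 2) * (\<sigma>\<^sup>2) powr (- ?N / 2)"
      by (rule powr_mult)
    have e2: "(\<sigma>\<^sup>2) powr (- ?N / 2) = inverse ((\<sigma>\<^sup>2) powr (?N / 2))"
      using powr_minus[of "\<sigma>\<^sup>2" "?N / 2"] by simp
    show ?thesis unfolding e1 e2 by (rule divide_inverse[symmetric])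
  qed
  have b: "(p / \<sigma>\<^sup>2) powr (?N / 2) = p powr (?N / 2) / (\<sigma>\<^sup>2) powr (?N / 2)"
    using s2 p by (simp add: powr_divide)
  have c: "- (norm (sqrt p *\<^sub>R y))\<^sup>2 / (2 * \<sigma>\<^sup>2) = - (p / \<sigma>\<^sup>2 * (norm y)\<^sup>2) / 2"
    using norm_sqrt_scale[OF p, of y] s2 by (simp add: field_simps)
  have S: "(\<sigma>\<^sup>2) powr (?N / 2) \<noteq> 0" using s2 by simp
  have gen: "P * (c / S * E * F) = F * (c * (P / S) * E)" if "S \<noteq> 0" for P c S E F :: real
    using that by (simp add: field_simps)
  show ?thesis unfolding gg_def a b c by (rule gen[OF S])
qed

lemma region_integral:
  fixes \<Omega> :: "'a::euclidean_space set" and s :: 'a and f :: "real \<Rightarrow> real"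
  assumes \<Omega>: "\<Omega> \<in> sets lborel" and p: "0 < p"
    and f_nn: "\<And>\<sigma>. 0 \<le> f \<sigma>" and f_int: "integrable lborel f"
  shows "(LINT r:((\<lambda>x. sqrt p *\<^sub>R x) ` \<Omega>)|lborel. sirp_density f (r - sqrt p *\<^sub>R s)) = PHI f {y. s + y \<in> \<Omega>} p"
proof -
  let ?N = "real DIM('a)"
  define A where "A = {y. s + y \<in> \<Omega>}"
  have fm[measurable]: "f \<in> borel_measurable borel" using f_int by (simp add: borel_measurable_integrable)
  have A[measurable]: "A \<in> sets lborel"
  proof -
    have "A = (\<lambda>y. s + y) -` \<Omega> \<inter> space lborel" by (auto simp: A_def)
    also have "\<dots> \<in> sets lborel" using \<Omega> by measurable
    finally show ?thesis .
  qed
  have sp: "0 < sqrt p" using p by simp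
  have ind: "indicator ((\<lambda>x. sqrt p *\<^sub>R x) ` \<Omega>) r = (indicator \<Omega> ((1 / sqrt p) *\<^sub>R r) :: real)" for r
  proof -
    have "r \<in> (\<lambda>x. sqrt p *\<^sub>R x) ` \<Omega> \<longleftrightarrow> (1 / sqrt p) *\<^sub>R r \<in> \<Omega>"
    proof
      assume "r \<in> (\<lambda>x. sqrt p *\<^sub>R x) ` \<Omega>" then show "(1 / sqrt p) *\<^sub>R r \<in> \<Omega>" using sp by auto
    next
      assume "(1 / sqrt p) *\<^sub>R r \<in> \<Omega>"
      moreover have "r = sqrt p *\<^sub>R ((1 / sqrt p) *\<^sub>R r)" using sp by simp
      ultimately show "r \<in> (\<lambda>x. sqrt p *\<^sub>R x) ` \<Omega>" by blast
    qed
    then show ?thesis by (simp add: indicator_def)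
  qed
  have "(LINT r:((\<lambda>x. sqrt p *\<^sub>R x) ` \<Omega>)|lborel. sirp_density f (r - sqrt p *\<^sub>R s))
      = (LINT r|lborel. indicator \<Omega> ((1 / sqrt p) *\<^sub>R r) * sirp_density f (r - sqrt p *\<^sub>R s))"
    unfolding set_lebesgue_integral_def ind by simp
  also have "\<dots> = \<bar>sqrt p\<bar> ^ DIM('a) * (LINT y|lborel. indicator \<Omega> ((1 / sqrt p) *\<^sub>R (sqrt p *\<^sub>R s + sqrt p *\<^sub>R y)) *
        sirp_density f ((sqrt p *\<^sub>R s + sqrt p *\<^sub>R y) - sqrt p *\<^sub>R s))"
    using sp \<Omega> by (intro lborel_integral_affine_euclid) auto
  also have "\<dots> = p powr (?N / 2) * (LINT y|lborel. indicator A y * sirp_density f (sqrt p *\<^sub>R y))"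
    using sp p by (simp add: sqrt_pow_powr A_def scaleR_add_right indicator_def)
  also have "\<dots> = (LINT y|lborel. indicator A y * (p powr (?N / 2) * sirp_density f (sqrt p *\<^sub>R y)))"
    by (subst integral_mult_right_zero[symmetric]) (simp add: mult.left_commute)
  also have "\<dots> = (LINT y|lborel. LINT \<sigma>|lborel. indicator A y * (indicator {0<..} \<sigma> * f \<sigma> * gg (p / \<sigma>\<^sup>2) y))"
  proof (rule Bochner_Integration.integral_cong[OF refl])
    fix y :: 'a
    have "p powr (?N / 2) * sirp_density f (sqrt p *\<^sub>R y) =
       (LINT \<sigma>|lborel. p powr (?N / 2) * (indicator {0<..} \<sigma> * ((2 * pi * \<sigma>\<^sup>2) powr (- ?N / 2) * exp (- (norm (sqrt p *\<^sub>R y))\<^sup>2 / (2 * \<sigma>\<^sup>2)) * f \<sigma>)))"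
      unfolding sirp_density_def set_lebesgue_integral_def by simp
    also have "\<dots> = (LINT \<sigma>|lborel. indicator {0<..} \<sigma> * f \<sigma> * gg (p / \<sigma>\<^sup>2) y)"
    proof (rule Bochner_Integration.integral_cong[OF refl])
      fix \<sigma> :: real
      show "p powr (?N / 2) * (indicator {0<..} \<sigma> * ((2 * pi * \<sigma>\<^sup>2) powr (- ?N / 2) * exp (- (norm (sqrt p *\<^sub>R y))\<^sup>2 / (2 * \<sigma>\<^sup>2)) * f \<sigma>))
          = indicator {0<..} \<sigma> * f \<sigma> * gg (p / \<sigma>\<^sup>2) y"
        using sirp_gg[OF p, of \<sigma> y f] by (cases "0 < \<sigma>") (auto simp: indicator_def mult.assoc)
    qed
    finally show "indicator A y * (p powr (?N / 2) * sirp_density f (sqrt p *\<^sub>R y)) =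
        (LINT \<sigma>|lborel. indicator A y * (indicator {0<..} \<sigma> * f \<sigma> * gg (p / \<sigma>\<^sup>2) y))" by simp
  qed
  also have "\<dots> = (LINT \<sigma>|lborel. LINT y|lborel. indicator A y * (indicator {0<..} \<sigma> * f \<sigma> * gg (p / \<sigma>\<^sup>2) y))"
  proof -
    have PS: "pair_sigma_finite (lborel :: real measure) (lborel :: 'a measure)"
      by (simp add: pair_sigma_finite_def lborel.sigma_finite_measure_axioms)
    define G where "G = (\<lambda>(\<sigma>::real, y::'a). indicator A y * (indicator {0<..} \<sigma> * f \<sigma> * gg (p / \<sigma>\<^sup>2) y))"
    have Gm[measurable]: "G \<in> borel_measurable (lborel \<Otimes>\<^sub>M lborel)"
      unfolding G_def by measurable
    have Gi: "integrable (lborel \<Otimes>\<^sub>M lborel) G"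
    proof (rule pair_sigma_finite.Fubini_integrable[OF PS Gm])
      have eq: "(LINT y|lborel. norm (G (\<sigma>, y))) = indicator {0<..} \<sigma> * f \<sigma> * HH A (p / \<sigma>\<^sup>2)" for \<sigma>
      proof -
        have "(LINT y|lborel. norm (G (\<sigma>, y))) = (LINT y|lborel. indicator {0<..} \<sigma> * f \<sigma> * (indicator A y * gg (p / \<sigma>\<^sup>2) y))"
          using f_nn[of \<sigma>] gg_nonneg[of "p / \<sigma>\<^sup>2"] by (intro Bochner_Integration.integral_cong) (auto simp: G_def indicator_def abs_mult abs_of_nonneg)
        then show ?thesis by (simp add: HH_def)
      qed
      define C0 where "C0 = (LINT z|lborel. FF0 (z::'a))"
      show "integrable lborel (\<lambda>\<sigma>. LINT y|lborel. norm (G (\<sigma>, y)))"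
        unfolding eq
      proof (rule Bochner_Integration.integrable_bound[OF integrable_mult_right[OF f_int, of C0]])
        show "(\<lambda>\<sigma>. indicator {0<..} \<sigma> * f \<sigma> * HH A (p / \<sigma>\<^sup>2)) \<in> borel_measurable lborel"
          by (rule PHI_integrand_meas[OF fm A])
        show "AE \<sigma> in lborel. norm (indicator {0<..} \<sigma> * f \<sigma> * HH A (p / \<sigma>\<^sup>2)) \<le> norm (C0 * f \<sigma>)"
        proof (rule AE_I2)
          fix \<sigma> :: real
          show "norm (indicator {0<..} \<sigma> * f \<sigma> * HH A (p / \<sigma>\<^sup>2)) \<le> norm (C0 * f \<sigma>)"
          proof (cases "0 < \<sigma>")
            case True
            then have "\<bar>HH A (p / \<sigma>\<^sup>2)\<bar> \<le> C0" using HH_bound[OF A, of "p / \<sigma>\<^sup>2"] p by (simp add: C0_def)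
            then have "f \<sigma> * \<bar>HH A (p / \<sigma>\<^sup>2)\<bar> \<le> f \<sigma> * C0" by (rule mult_left_mono) (rule f_nn)
            moreover have "0 \<le> C0" using HH_bound[OF A, of 1] by (simp add: C0_def)
            ultimately show ?thesis using True f_nn[of \<sigma>] by (simp add: abs_mult mult.commute)
          qed simp
        qed
      qed
      show "AE \<sigma> in lborel. integrable lborel (\<lambda>y. G (\<sigma>, y))"
      proof (rule AE_I2)
        fix \<sigma> :: real
        show "integrable lborel (\<lambda>y. G (\<sigma>, y))"
        proof (cases "0 < \<sigma>")
          case True
          then have "integrable lborel (\<lambda>y. (indicator {0<..} \<sigma> * f \<sigma>) * (indicator A y * gg (p / \<sigma>\<^sup>2) y))"
            using integrable_mult_indicator[OF A gg_integrable[of "p / \<sigma>\<^sup>2"]] p by (intro integrable_mult_right) auto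
          then show ?thesis by (simp add: G_def mult_ac)
        qed (simp add: G_def)
      qed
    qed
    have "(LINT y|lborel. LINT \<sigma>|lborel. G (\<sigma>, y)) = (LINT \<sigma>|lborel. LINT y|lborel. G (\<sigma>, y))"
      using pair_sigma_finite.Fubini_integral[OF PS, of "\<lambda>\<sigma> y. G (\<sigma>, y)"] Gi by simp
    then show ?thesis by (simp add: G_def)
  qed
  also have "\<dots> = PHI f A p"
    unfolding PHI_def HH_def
  proof (rule Bochner_Integration.integral_cong[OF refl])
    fix \<sigma> :: real
    show "(LINT y|lborel. indicator A y * (indicator {0<..} \<sigma> * f \<sigma> * gg (p / \<sigma>\<^sup>2) y)) =
        indicator {0<..} \<sigma> * f \<sigma> * (LINT y|lborel. indicator A y * gg (p / \<sigma>\<^sup>2) (y::'a))"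
      by (subst integral_mult_right_zero[symmetric]) (simp add: mult_ac)
  qed
  finally show ?thesis by (simp add: A_def)
qed

lemma Ak_meas:
  assumes \<Omega>: "\<Omega> \<in> sets lborel"
  shows "{y. s + y \<in> \<Omega>} \<in> sets (lborel :: 'a::euclidean_space measure)"
proof -
  have "{y. s + y \<in> \<Omega>} = (\<lambda>y. s + y) -` \<Omega> \<inter> space lborel" by auto
  also have "\<dots> \<in> sets lborel" using \<Omega> by measurable
  finally show ?thesis .
qed

lemma cc_star:
  assumes cc: "center_convex s \<Omega>" and y: "s + y \<in> \<Omega>" and mu: "0 \<le> \<mu>" "\<mu> \<le> 1"
  shows "s + \<mu> *\<^sub>R y \<in> \<Omega>"
proof -
  have "closed_segment s (s + y) \<subseteq> \<Omega>" using cc y by (auto simp: center_convex_def)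
  moreover have "s + \<mu> *\<^sub>R y \<in> closed_segment s (s + y)"
    unfolding closed_segment_def using mu
    by (intro CollectI exI[of _ \<mu>]) (simp add: algebra_simps)
  ultimately show ?thesis by blast
qed

lemma cc_inner:
  fixes s :: "'a::euclidean_space"
  assumes cc: "center_convex s \<Omega>" and d: "0 < d" "d \<le> infdist s (frontier \<Omega>)" and z: "s + z \<notin> \<Omega>"
  shows "d \<le> norm z"
proof -
  have "frontier \<Omega> \<noteq> {}" using d by (auto simp: infdist_def)
  then have "\<Omega> \<noteq> {}" by auto
  then obtain x where x: "x \<in> \<Omega>" by auto
  then have "closed_segment s x \<subseteq> \<Omega>" using cc by (auto simp: center_convex_def)
  then have sO: "s \<in> \<Omega>" by auto
  have "closed_segment s (s + z) \<inter> \<Omega> \<noteq> {}" using sO by auto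
  moreover have "closed_segment s (s + z) - \<Omega> \<noteq> {}" using z by auto
  ultimately obtain b where b: "b \<in> closed_segment s (s + z)" "b \<in> frontier \<Omega>"
    using connected_Int_frontier[OF connected_segment] by blast
  have "d \<le> infdist s (frontier \<Omega>)" by (rule d)
  also have "\<dots> \<le> dist s b" by (rule infdist_le[OF b(2)])
  also have "\<dots> \<le> dist s (s + z)" using dist_in_closed_segment[OF b(1)] by (simp add: dist_commute)
  also have "\<dots> = norm z" by (simp add: dist_norm)
  finally show ?thesis .
qed

lemma cc_outer:
  fixes s :: "'a::euclidean_space"
  assumes D: "\<And>b. b \<in> frontier \<Omega> \<Longrightarrow> dist s b \<le> D"
    and z: "s + z \<in> \<Omega>" and mu: "1 < \<mu>" and z': "s + \<mu> *\<^sub>R z \<notin> \<Omega>"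
  shows "norm z \<le> D"
proof -
  have "closed_segment (s + z) (s + \<mu> *\<^sub>R z) \<inter> \<Omega> \<noteq> {}" using z by auto
  moreover have "closed_segment (s + z) (s + \<mu> *\<^sub>R z) - \<Omega> \<noteq> {}" using z' by auto
  ultimately obtain b where b: "b \<in> closed_segment (s + z) (s + \<mu> *\<^sub>R z)" "b \<in> frontier \<Omega>"
    using connected_Int_frontier[OF connected_segment] by blast
  from b(1) obtain u where u: "0 \<le> u" "u \<le> 1" "b = (1 - u) *\<^sub>R (s + z) + u *\<^sub>R (s + \<mu> *\<^sub>R z)"
    unfolding closed_segment_def by blast
  have bs: "b = s + (1 + u * (\<mu> - 1)) *\<^sub>R z" using u(3) by (simp add: algebra_simps)
  have c: "1 \<le> 1 + u * (\<mu> - 1)" using u mu by simp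
  have "norm z \<le> (1 + u * (\<mu> - 1)) * norm z" using c by (simp add: mult_le_cancel_right1)
  also have "\<dots> = dist s b" using c by (simp add: bs dist_norm)
  also have "\<dots> \<le> D" by (rule D[OF b(2)])
  finally show ?thesis .
qed

lemma arith2:
  fixes \<sigma> \<sigma>2 d r p c :: real
  assumes "0 < \<sigma>" "\<sigma> \<le> \<sigma>2" "0 < d" "d \<le> r" "0 < p" "c * \<sigma>2\<^sup>2 / d\<^sup>2 \<le> p"
  shows "c \<le> p / \<sigma>\<^sup>2 * r\<^sup>2"
proof (cases "c \<le> 0")
  case True
  moreover have "0 \<le> p / \<sigma>\<^sup>2 * r\<^sup>2" using assms by simp
  ultimately show ?thesis by linarith
next
  case False
  have s2: "\<sigma>\<^sup>2 \<le> \<sigma>2\<^sup>2" using assms by (intro power_mono) auto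
  have r2: "d\<^sup>2 \<le> r\<^sup>2" using assms by (intro power_mono) auto
  have "c * \<sigma>\<^sup>2 \<le> c * \<sigma>2\<^sup>2" using s2 False by simp
  also have "\<dots> \<le> p * d\<^sup>2" using assms(6) assms(3) by (simp add: divide_le_eq)
  also have "\<dots> \<le> p * r\<^sup>2" using r2 assms(5) by simp
  finally have "c * \<sigma>\<^sup>2 \<le> p * r\<^sup>2" .
  then show ?thesis using assms(1) by (simp add: field_simps)
qed

lemma arith3:
  fixes \<sigma> \<sigma>1 D r p c :: real
  assumes "0 < \<sigma>" "0 \<le> \<sigma>1" "\<sigma>1 \<le> \<sigma>" "0 \<le> r" "r \<le> D" "0 < p" "p \<le> c * \<sigma>1\<^sup>2 / D\<^sup>2"
  shows "p / \<sigma>\<^sup>2 * r\<^sup>2 \<le> c"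
proof (cases "D = 0")
  case True
  then show ?thesis using assms by simp
next
  case False
  then have D2: "0 < D\<^sup>2" by simp
  have pD: "p * D\<^sup>2 \<le> c * \<sigma>1\<^sup>2" using assms(7) D2 by (simp add: le_divide_eq)
  have r2: "r\<^sup>2 \<le> D\<^sup>2" using assms by (intro power_mono) auto
  have s2: "\<sigma>1\<^sup>2 \<le> \<sigma>\<^sup>2" using assms by (intro power_mono) auto
  have "0 < p * D\<^sup>2" using assms(6) D2 by simp
  then have "0 < c * \<sigma>1\<^sup>2" using pD by linarith
  then have c0: "0 \<le> c" using zero_le_power2[of \<sigma>1] by (metis less_eq_real_def mult_nonpos_nonneg not_le)
  have "p * r\<^sup>2 \<le> p * D\<^sup>2" using r2 assms(6) by simp
  also have "\<dots> \<le> c * \<sigma>1\<^sup>2" by (rule pD)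
  also have "\<dots> \<le> c * \<sigma>\<^sup>2" using s2 c0 by (simp add: mult_left_mono)
  finally have "p * r\<^sup>2 \<le> c * \<sigma>\<^sup>2" .
  then show ?thesis using assms(1) by (simp add: field_simps)
qed

theorem theorem5:
  fixes f :: "real \<Rightarrow> real" and \<sigma>1 \<sigma>2 :: real
    and M :: nat and prior :: "nat \<Rightarrow> real"
    and s :: "nat \<Rightarrow> 'a::euclidean_space" and \<Omega> :: "nat \<Rightarrow> 'a set"
    and p :: real
  assumes sigma: "0 \<le> \<sigma>1" "\<sigma>1 \<le> \<sigma>2"
    and f_nonneg: "\<And>\<sigma>. 0 \<le> f \<sigma>"
    and f_supp: "\<And>\<sigma>. \<sigma> \<notin> {\<sigma>1..\<sigma>2} \<Longrightarrow> f \<sigma> = 0"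
    and f_int: "integrable lborel f"
    and f_norm: "(LINT \<sigma>|lborel. f \<sigma>) = 1"
    and M_pos: "0 < M"
    and prior_nonneg: "\<And>k. k < M \<Longrightarrow> 0 \<le> prior k"
    and prior_sum: "(\<Sum>k<M. prior k) = 1"
    and \<Omega>_meas: "\<And>k. k < M \<Longrightarrow> \<Omega> k \<in> sets lborel"
    and \<Omega>_disj: "\<And>j k. j < M \<Longrightarrow> k < M \<Longrightarrow> j \<noteq> k \<Longrightarrow> \<Omega> j \<inter> \<Omega> k = {}"
    and \<Omega>_cc: "\<And>k. k < M \<Longrightarrow> center_convex (s k) (\<Omega> k)"
    and p_pos: "0 < p"
  shows "(\<forall>q>0. symbol_error_rate (sirp_density f) M prior s \<Omega> differentiable (at q))
    \<and> (0 < d_min M s \<Omega> \<and> (real DIM('a) - 2) * \<sigma>2\<^sup>2 / (d_min M s \<Omega>)\<^sup>2 \<le> p \<longrightarrow>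
         (\<exists>D. (deriv (symbol_error_rate (sirp_density f) M prior s \<Omega>) has_real_derivative D) (at p)
              \<and> 0 \<le> D))
    \<and> (\<forall>dmax. d_max M s \<Omega> = ereal dmax \<and> p \<le> (real DIM('a) - 2) * \<sigma>1\<^sup>2 / dmax\<^sup>2 \<longrightarrow>
         (\<exists>D. (deriv (symbol_error_rate (sirp_density f) M prior s \<Omega>) has_real_derivative D) (at p)
              \<and> D \<le> 0))"
proof -
  define E where "E = symbol_error_rate (sirp_density f) M prior s \<Omega>"
  define A where "A k = {y. s k + y \<in> \<Omega> k}" for k
  have A_meas: "A k \<in> sets lborel" if "k < M" for k
    unfolding A_def using Ak_meas[OF \<Omega>_meas[OF that]] .
  define G1 where "G1 q = (\<Sum>k<M. prior k * (0 - PHI1 f (A k) q))" for q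
  define G2 where "G2 q = (\<Sum>k<M. prior k * (0 - PHI2 f (A k) q))" for q
  have EQ: "E q = (\<Sum>k<M. prior k * (1 - PHI f (A k) q))" if q: "0 < q" for q
    unfolding E_def symbol_error_rate_def
    by (intro sum.cong refl) (simp add: A_def region_integral[OF \<Omega>_meas q f_nonneg f_int])
  have dF: "((\<lambda>q. \<Sum>k<M. prior k * (1 - PHI f (A k) q)) has_real_derivative G1 q) (at q)" if q: "0 < q" for q
    unfolding G1_def
    by (intro DERIV_sum DERIV_cmult DERIV_diff DERIV_const PHI_deriv[OF f_nonneg f_int A_meas q]) auto
  have dE: "(E has_real_derivative G1 q) (at q)" if q: "0 < q" for q
    by (rule has_field_derivative_transform_within_open[OF dF[OF q], of "{0<..}"]) (use q EQ in auto)
  have dG1: "(G1 has_real_derivative G2 q) (at q)" if q: "0 < q" for q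
    unfolding G1_def[abs_def] G2_def
    by (intro DERIV_sum DERIV_cmult DERIV_diff DERIV_const PHI1_deriv[OF f_nonneg f_int A_meas q]) auto
  have dD: "(deriv E has_real_derivative G2 p) (at p)"
    by (rule has_field_derivative_transform_within_open[OF dG1[OF p_pos], of "{0<..}"])
       (use p_pos DERIV_imp_deriv[OF dE] in auto)
  have part1: "\<forall>q>0. E differentiable (at q)"
    using dE real_differentiable_def by blast
  have fsupp: "\<sigma>1 \<le> \<sigma> \<and> \<sigma> \<le> \<sigma>2" if "f \<sigma> \<noteq> 0" for \<sigma>
    using f_supp[of \<sigma>] that by auto
  have part2: "0 \<le> G2 p" if h: "0 < d_min M s \<Omega>" "(real DIM('a) - 2) * \<sigma>2\<^sup>2 / (d_min M s \<Omega>)\<^sup>2 \<le> p"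
  proof -
    have "PHI2 f (A k) p \<le> 0" if k: "k < M" for k
    proof (rule PHI2_nonpos[OF f_nonneg f_int A_meas[OF k]])
      fix \<sigma> :: real assume \<sigma>: "0 < \<sigma>" "f \<sigma> \<noteq> 0"
      have dle: "d_min M s \<Omega> \<le> infdist (s k) (frontier (\<Omega> k))"
        unfolding d_min_def using k by (intro Min_le) auto
      show "HH2 (A k) (p / \<sigma>\<^sup>2) \<le> 0"
      proof (rule HH2_nonpos[OF A_meas[OF k]])
        show "0 < p / \<sigma>\<^sup>2" using p_pos \<sigma> by simp
        fix y \<mu> assume "y \<in> A k" "0 \<le> \<mu>" "\<mu> \<le> (1::real)"
        then show "\<mu> *\<^sub>R y \<in> A k" using cc_star[OF \<Omega>_cc[OF k]] by (auto simp: A_def)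
      next
        fix z assume "z \<notin> A k"
        then have "d_min M s \<Omega> \<le> norm z"
          using cc_inner[OF \<Omega>_cc[OF k] h(1) dle] by (auto simp: A_def)
        then show "real DIM('a) - 2 \<le> p / \<sigma>\<^sup>2 * (norm z)\<^sup>2"
          using arith2[OF \<sigma>(1) _ h(1) _ p_pos h(2)] fsupp[OF \<sigma>(2)] by auto
      qed
    qed
    note P = this
    show ?thesis unfolding G2_def
    proof (intro sum_nonneg)
      fix k assume "k \<in> {..<M}"
      then have k: "k < M" by simp
      show "0 \<le> prior k * (0 - PHI2 f (A k) p)"
        using prior_nonneg[OF k] P[OF k] by (intro mult_nonneg_nonneg) auto
    qed
  qed
  have part3: "G2 p \<le> 0" if h: "d_max M s \<Omega> = ereal dmax" "p \<le> (real DIM('a) - 2) * \<sigma>1\<^sup>2 / dmax\<^sup>2" for dmax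
  proof -
    have "0 \<le> PHI2 f (A k) p" if k: "k < M" for k
    proof (rule PHI2_nonneg[OF f_nonneg f_int A_meas[OF k]])
      fix \<sigma> :: real assume \<sigma>: "0 < \<sigma>" "f \<sigma> \<noteq> 0"
      have Db: "dist (s k) b \<le> dmax" if b: "b \<in> frontier (\<Omega> k)" for b
      proof -
        have "ereal (dist (s k) b) \<le> (SUP b\<in>frontier (\<Omega> k). ereal (dist (s k) b))"
          by (rule SUP_upper[OF b])
        also have "\<dots> \<le> d_max M s \<Omega>"
          unfolding d_max_def using k by (intro Max_ge) auto
        finally show ?thesis using h(1) by simp
      qed
      show "0 \<le> HH2 (A k) (p / \<sigma>\<^sup>2)"
      proof (rule HH2_nonneg[OF A_meas[OF k]])
        show "0 < p / \<sigma>\<^sup>2" using p_pos \<sigma> by simp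
        fix y \<mu> assume "y \<in> A k" "0 \<le> \<mu>" "\<mu> \<le> (1::real)"
        then show "\<mu> *\<^sub>R y \<in> A k" using cc_star[OF \<Omega>_cc[OF k]] by (auto simp: A_def)
      next
        fix z \<mu> assume z: "z \<in> A k" "1 < \<mu>" "\<mu> *\<^sub>R z \<notin> A k"
        then have "norm z \<le> dmax"
          using cc_outer[OF Db, where z=z and \<mu>=\<mu>] by (auto simp: A_def)
        then show "p / \<sigma>\<^sup>2 * (norm z)\<^sup>2 \<le> real DIM('a) - 2"
          using arith3[OF \<sigma>(1) sigma(1) _ norm_ge_zero _ p_pos h(2)] fsupp[OF \<sigma>(2)] by auto
      qed
    qed
    note P = this
    show ?thesis unfolding G2_def
    proof (intro sum_nonpos)
      fix k assume "k \<in> {..<M}"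
      then have k: "k < M" by simp
      show "prior k * (0 - PHI2 f (A k) p) \<le> 0"
        using prior_nonneg[OF k] P[OF k] by (intro mult_nonneg_nonpos) auto
    qed
  qed
  show ?thesis
    unfolding E_def[symmetric]
    using part1 part2 part3 dD by blast
qed


end
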